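(* In the setting of the context (with $n_i\ge6$ for all $i$), $$\mathbb E(C_5)=\operatorname{tr}((\boldsymbol T\boldsymbol V_N)^3),\qquad \operatorname{Var}(C_5)\le\frac{\prod_{i=1}^a\binom{n_i}{6}-\prod_{i=1}^a\binom{n_i-6}{6}}{\prod_{i=1}^a\binom{n_i}6}\cdot27\operatorname{tr}^3((\boldsymbol T\boldsymbol V_N)^2).$$
   Context: Let $a,d\in\mathbb N$, $n_1,\dots,n_a\in\mathbb N$, $N=\sum_i n_i$. Observations $\boldsymbol X_{i,j}\sim\mathcal N_d(\boldsymbol\mu_i,\boldsymbol\Sigma_i)$, $j=1,\dots,n_i$, $i=1,\dots,a$, mutually independent, $\boldsymbol\Sigma_i$ symmetric positive definite. Let $\boldsymbol T=\boldsymbol T_W\otimes\boldsymbol T_S$ with $\boldsymbol T_W\in\mathbb R^{a\times a}$, $\boldsymbol T_S\in\mathbb R^{d\times d}$ symmetric idempotent, and $\boldsymbol V_N=\bigoplus_{i=1}^a\frac N{n_i}\boldsymbol\Sigma_i$. For indices with $\ell_{2i-1}\ne\ell_{2i}$ in $\{1,\dots,n_i\}$ define $\boldsymbol Z_{(\ell_1,\dots,\ell_{2a})}=(\sqrt{N/n_1}(\boldsymbol X_{1,\ell_1}-\boldsymbol X_{1,\ell_2})^\top,\dots,\sqrt{N/n_a}(\boldsymbol X_{a,\ell_{2a-1}}-\boldsymbol X_{a,\ell_{2a}})^\top)^\top$. For each $i$ let $\ell_{1,i},\dots,\ell_{6,i}$ be pairwise distinct in $\{1,\dots,n_i\}$;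 put $\boldsymbol Z^{(12)}=\boldsymbol Z_{(\ell_{1,1},\ell_{2,1},\dots,\ell_{1,a},\ell_{2,a})}$, $\boldsymbol Z^{(34)}=\boldsymbol Z_{(\ell_{3,1},\ell_{4,1},\dots,\ell_{3,a},\ell_{4,a})}$, $\boldsymbol Z^{(56)}=\boldsymbol Z_{(\ell_{5,1},\ell_{6,1},\dots,\ell_{5,a},\ell_{6,a})}$, $\Lambda_1=\boldsymbol Z^{(12)\top}\boldsymbol T\boldsymbol Z^{(34)}$, $\Lambda_2=\boldsymbol Z^{(34)\top}\boldsymbol T\boldsymbol Z^{(56)}$, $\Lambda_3=\boldsymbol Z^{(56)\top}\boldsymbol T\boldsymbol Z^{(12)}$, and $$C_5=\frac{1}{8\prod_{i=1}^a\frac{n_i!}{(n_i-6)!}}\sum\Lambda_1\Lambda_2\Lambda_3,$$ the sum running, for every $i$, over all ordered 6-tuples of pairwise distinct elements of $\{1,\dots,n_i\}$. $\operatorname{tr}^k$ denotes the $k$-th power of the trace. *)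

theory Defs
  imports "HOL-Probability.Probability"
begin

definition sym_pos_def_mat :: "real^'d^'d \<Rightarrow> bool" where
  "sym_pos_def_mat S \<longleftrightarrow> transpose S = S \<and> (\<forall>x. x \<noteq> 0 \<longrightarrow> x \<bullet> (S *v x) > 0)"

definition sym_idem_mat :: "real^'d^'d \<Rightarrow> bool" where
  "sym_idem_mat A \<longleftrightarrow> transpose A = A \<and> A ** A = A"

definition mvn_density :: "real^'d \<Rightarrow> real^'d^'d \<Rightarrow> real^'d \<Rightarrow> real" where
  "mvn_density mu S x =
     exp (- ((x - mu) \<bullet> (matrix_inv S *v (x - mu))) / 2) / sqrt ((2 * pi) ^ CARD('d) * det S)"

definition kron :: "real^'g^'g \<Rightarrow> real^'d^'d \<Rightarrow> real^('g \<times> 'd)^('g \<times> 'd)" where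
  "kron A B = (\<chi> p q. A $ fst p $ fst q * B $ snd p $ snd q)"

definition VN :: "('g::finite \<Rightarrow> nat) \<Rightarrow> ('g \<Rightarrow> real^'d^'d) \<Rightarrow> real^('g \<times> 'd)^('g \<times> 'd)" where
  "VN n S = (\<chi> p q. if fst p = fst q
       then real (\<Sum>i\<in>UNIV. n i) / real (n (fst p)) * S (fst p) $ snd p $ snd q else 0)"

text \<open>Index set: for every group i an ordered 6-tuple (positions 0..5) of pairwise distinct
  indices in {0..<n i} (observations are indexed from 0).\<close>
definition six_tuples :: "('g::finite \<Rightarrow> nat) \<Rightarrow> ('g \<Rightarrow> nat \<Rightarrow> nat) set" where
  "six_tuples n = PiE UNIV (\<lambda>i. {f \<in> {..<6::nat} \<rightarrow>\<^sub>E {..<n i}. inj_on f {..<6}})"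

definition Zblk :: "('g::finite \<Rightarrow> nat) \<Rightarrow> ('g \<Rightarrow> nat \<Rightarrow> 'w \<Rightarrow> real^'d)
     \<Rightarrow> ('g \<Rightarrow> nat \<Rightarrow> nat) \<Rightarrow> nat \<Rightarrow> nat \<Rightarrow> 'g \<Rightarrow> 'w \<Rightarrow> real^'d" where
  "Zblk n X l p q i w = sqrt (real (\<Sum>k\<in>UNIV. n k) / real (n i)) *\<^sub>R (X i (l i p) w - X i (l i q) w)"

text \<open>The bilinear form Z^(pq)^T (T_W \<otimes> T_S) Z^(rs), written out blockwise.\<close>
definition Lam :: "('g::finite \<Rightarrow> nat) \<Rightarrow> ('g \<Rightarrow> nat \<Rightarrow> 'w \<Rightarrow> real^'d::finite) \<Rightarrow> real^'g^'g \<Rightarrow> real^'d^'d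
     \<Rightarrow> ('g \<Rightarrow> nat \<Rightarrow> nat) \<Rightarrow> nat \<Rightarrow> nat \<Rightarrow> nat \<Rightarrow> nat \<Rightarrow> 'w \<Rightarrow> real" where
  "Lam n X TW TS l p q r s w =
     (\<Sum>i\<in>UNIV. \<Sum>j\<in>UNIV. TW $ i $ j * (Zblk n X l p q i w \<bullet> (TS *v Zblk n X l r s j w)))"

definition C5 :: "('g::finite \<Rightarrow> nat) \<Rightarrow> ('g \<Rightarrow> nat \<Rightarrow> 'w \<Rightarrow> real^'d::finite) \<Rightarrow> real^'g^'g \<Rightarrow> real^'d^'d
     \<Rightarrow> 'w \<Rightarrow> real" where
  "C5 n X TW TS w =
     1 / (8 * (\<Prod>i\<in>UNIV. fact (n i) / fact (n i - 6))) *
     (\<Sum>l\<in>six_tuples n. Lam n X TW TS l 0 1 2 3 w * Lam n X TW TS l 2 3 4 5 w * Lam n X TW TS l 4 5 0 1 w)"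

end

theory Submission
  imports Defs
begin

lemma spd_invertible:
  fixes S :: "real^'d^'d"
  assumes "sym_pos_def_mat S"
  shows "invertible S"
proof -
  have "\<forall>x. S *v x = 0 \<longrightarrow> x = 0"
  proof (intro allI impI)
    fix x assume "S *v x = 0"
    then have "x \<bullet> (S *v x) = 0" by simp
    then show "x = 0" using assms unfolding sym_pos_def_mat_def by (metis less_irrefl)
  qed
  then show ?thesis using matrix_left_invertible_ker invertible_left_inverse by blast
qed

lemma inv_props:
  fixes S :: "real^'d^'d"
  assumes "invertible S"
  shows "S ** matrix_inv S = mat 1" "matrix_inv S ** S = mat 1"
proof -
  have "\<exists>A'. S ** A' = mat 1 \<and> A' ** S = mat 1" using assms unfolding invertible_def by blast
  then have "S ** matrix_inv S = mat 1 \<and> matrix_inv S ** S = mat 1"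
    unfolding matrix_inv_def by (rule someI_ex)
  then show "S ** matrix_inv S = mat 1" "matrix_inv S ** S = mat 1" by auto
qed

lemma inv_sym:
  fixes S :: "real^'d^'d"
  assumes "invertible S" "transpose S = S"
  shows "transpose (matrix_inv S) = matrix_inv S"
proof -
  let ?Q = "matrix_inv S"
  have "transpose ?Q ** S = mat 1"
    using inv_props(1)[OF assms(1)] assms(2) by (metis matrix_transpose_mul transpose_mat)
  then have "transpose ?Q = transpose ?Q ** (S ** ?Q)" using inv_props(1)[OF assms(1)] by simp
  also have "\<dots> = ?Q" by (simp add: matrix_mul_assoc \<open>transpose ?Q ** S = mat 1\<close>)
  finally show ?thesis .
qed

lemma inner_mat_sym:
  fixes Q :: "real^'d^'d"
  assumes "transpose Q = Q"
  shows "x \<bullet> (Q *v y) = (Q *v x) \<bullet> y"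
  by (metis assms dot_lmul_matrix transpose_matrix_vector)

lemma quad_shift:
  fixes Q S :: "real^'d^'d"
  assumes "transpose Q = Q" "transpose S = S" "Q ** S = mat 1"
  shows "(y - t *\<^sub>R (S *v u)) \<bullet> (Q *v (y - t *\<^sub>R (S *v u)))
       = y \<bullet> (Q *v y) - 2*t*(u \<bullet> y) + t^2 * (u \<bullet> (S *v u))"
proof -
  have QS: "Q *v (S *v u) = u" by (simp add: matrix_vector_mul_assoc assms(3))
  have a: "(S *v u) \<bullet> (Q *v y) = u \<bullet> y"
    using inner_mat_sym[OF assms(1)] QS by (metis inner_commute)
  have b: "y \<bullet> (Q *v (S *v u)) = u \<bullet> y" using QS by (simp add: inner_commute)
  have c: "(S *v u) \<bullet> (Q *v (S *v u)) = u \<bullet> (S *v u)" using QS by (simp add: inner_commute)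
  show ?thesis
    by (simp add: matrix_vector_mult_diff_distrib matrix_vector_right_distrib inner_diff_left inner_diff_right
        a b c power2_eq_square algebra_simps matrix_vector_mult_scaleR)
qed

lemma mvn_pointwise:
  fixes S :: "real^'d^'d"
  assumes "sym_pos_def_mat S"
  shows "exp (t * (u \<bullet> (x - mu))) * mvn_density mu S x
       = exp (t^2 * (u \<bullet> (S *v u)) / 2) * mvn_density mu S (x - t *\<^sub>R (S *v u))"
proof -
  have inv: "invertible S" using spd_invertible[OF assms] .
  have sS: "transpose S = S" using assms unfolding sym_pos_def_mat_def by simp
  let ?Q = "matrix_inv S"
  have sQ: "transpose ?Q = ?Q" using inv_sym[OF inv sS] .
  have QS: "?Q ** S = mat 1" using inv_props[OF inv] by simp
  have eq: "(x - t *\<^sub>R (S *v u) - mu) = (x - mu) - t *\<^sub>R (S *v u)" by simp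
  have q: "((x - mu) - t *\<^sub>R (S *v u)) \<bullet> (?Q *v ((x - mu) - t *\<^sub>R (S *v u)))
       = (x - mu) \<bullet> (?Q *v (x - mu)) - 2*t*(u \<bullet> (x - mu)) + t^2 * (u \<bullet> (S *v u))"
    by (rule quad_shift[OF sQ sS QS])
  have "exp (t * (u \<bullet> (x - mu))) * exp (- ((x - mu) \<bullet> (?Q *v (x - mu))) / 2)
     = exp (t^2 * (u \<bullet> (S *v u)) / 2) * exp (- (((x - mu) - t *\<^sub>R (S *v u)) \<bullet> (?Q *v ((x - mu) - t *\<^sub>R (S *v u)))) / 2)"
    unfolding q mult_exp_exp by (intro arg_cong[where f=exp]) (simp add: field_simps)
  then show ?thesis unfolding mvn_density_def eq by (simp add: field_simps)
qed

lemma mv_meas[measurable]: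
  fixes A :: "real^'n^'m"
  assumes [measurable]: "f \<in> borel_measurable N"
  shows "(\<lambda>x. A *v f x) \<in> borel_measurable N"
proof -
  have "(\<lambda>x. A *v x) \<in> borel_measurable borel"
    by (intro borel_measurable_continuous_onI linear_continuous_on matrix_vector_mul_bounded_linear)
  from measurable_comp[OF assms this] show ?thesis by (simp add: comp_def)
qed

lemma nn_integral_lborel_translate:
  fixes f :: "'a::euclidean_space \<Rightarrow> ennreal"
  assumes [measurable]: "f \<in> borel_measurable borel"
  shows "(\<integral>\<^sup>+x. f (x + c) \<partial>lborel) = (\<integral>\<^sup>+x. f x \<partial>lborel)"
proof -
  have "lborel = density (distr lborel borel (\<lambda>x. c + 1 *\<^sub>R x)) (\<lambda>_. \<bar>1::real\<bar>^DIM('a))"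
    by (rule lborel_affine) simp
  then have L: "lborel = distr lborel (borel :: 'a measure) (\<lambda>x. c + x)" by (simp add: density_1)
  have "(\<integral>\<^sup>+x. f x \<partial>lborel) = (\<integral>\<^sup>+x. f x \<partial>distr lborel borel (\<lambda>x. c + x))"
    by (subst L[symmetric]) simp
  also have "\<dots> = (\<integral>\<^sup>+x. f (c + x) \<partial>lborel)"
    by (subst nn_integral_distr) auto
  finally show ?thesis by (simp add: add.commute)
qed

lemma mvn_mgf:
  fixes X :: "'w \<Rightarrow> real^'d" and S :: "real^'d^'d"
  assumes P: "prob_space M" and S: "sym_pos_def_mat S"
    and D: "distributed M lborel X (\<lambda>x. ennreal (mvn_density mu S x))"
  shows "(\<integral>\<^sup>+w. ennreal (exp (t * (u \<bullet> (X w - mu)))) \<partial>M) = ennreal (exp (t^2 * (u \<bullet> (S *v u)) / 2))"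
proof -
  interpret prob_space M by fact
  let ?f = "mvn_density mu S"
  let ?c = "t *\<^sub>R (S *v u)"
  let ?e = "exp (t^2 * (u \<bullet> (S *v u)) / 2)"
  have fm[measurable]: "?f \<in> borel_measurable borel"
    unfolding mvn_density_def by measurable
  have Xm[measurable]: "X \<in> borel_measurable M" using D by (auto simp: distributed_def)
  have one: "(\<integral>\<^sup>+x. ennreal (?f x) \<partial>lborel) = 1"
  proof -
    have "distr M lborel X = density lborel (\<lambda>x. ennreal (?f x))"
      using D by (simp add: distributed_distr_eq_density)
    then have "emeasure (distr M lborel X) UNIV = emeasure (density lborel (\<lambda>x. ennreal (?f x))) UNIV"
      by simp
    moreover have "emeasure (distr M lborel X) UNIV = 1"
      by (subst emeasure_distr) (auto simp: emeasure_space_1)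
    ultimately show ?thesis by (simp add: emeasure_density)
  qed
  have "(\<integral>\<^sup>+w. ennreal (exp (t * (u \<bullet> (X w - mu)))) \<partial>M)
      = (\<integral>\<^sup>+x. ennreal (?f x) * ennreal (exp (t * (u \<bullet> (x - mu)))) \<partial>lborel)"
    by (rule distributed_nn_integral[OF D, symmetric]) simp
  also have "\<dots> = (\<integral>\<^sup>+x. ennreal ?e * ennreal (?f (x - ?c)) \<partial>lborel)"
  proof (rule nn_integral_cong)
    fix x
    have "ennreal (?f x) * ennreal (exp (t * (u \<bullet> (x - mu))))
        = ennreal (exp (t * (u \<bullet> (x - mu))) * ?f x)"
      by (simp add: ennreal_mult'' mult.commute)
    also have "\<dots> = ennreal (?e * ?f (x - ?c))" using mvn_pointwise[OF S] by simp
    also have "\<dots> = ennreal ?e * ennreal (?f (x - ?c))" by (simp add: ennreal_mult')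
    finally show "ennreal (?f x) * ennreal (exp (t * (u \<bullet> (x - mu)))) = ennreal ?e * ennreal (?f (x - ?c))" .
  qed
  also have "\<dots> = ennreal ?e * (\<integral>\<^sup>+x. ennreal (?f (x - ?c)) \<partial>lborel)"
    by (rule nn_integral_cmult) simp
  also have "(\<integral>\<^sup>+x. ennreal (?f (x - ?c)) \<partial>lborel) = (\<integral>\<^sup>+x. ennreal (?f (x + (- ?c))) \<partial>lborel)"
    by simp
  also have "\<dots> = 1"
    using nn_integral_lborel_translate[of "\<lambda>x. ennreal (?f x)" "- ?c"] one by simp
  finally show ?thesis by simp
qed

lemma powser_coeff_zero:
  fixes c :: "nat \<Rightarrow> real"
  assumes S: "\<And>t. (\<lambda>n. c n * t^n) sums 0"
  shows "c n = 0"
proof (induction n rule: less_induct)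
  case (less n)
  have H: "\<And>t. t \<noteq> 0 \<Longrightarrow> norm t < 1 \<Longrightarrow> (\<lambda>i. c (i + n) * t^i) sums 0"
  proof -
    fix t :: real assume t: "t \<noteq> 0"
    have "(\<lambda>i. c (i + n) * t^(i + n)) sums (0 - (\<Sum>i<n. c i * t^i))"
      by (rule sums_split_initial_segment[OF S])
    also have "(\<Sum>i<n. c i * t^i) = 0" using less by simp
    finally have "(\<lambda>i. c (i + n) * t^(i + n) / t^n) sums (0 / t^n)"
      by (intro sums_divide) simp
    moreover have "\<And>i. c (i + n) * t^(i + n) / t^n = c (i + n) * t^i"
      using t by (simp add: power_add)
    ultimately show "(\<lambda>i. c (i + n) * t^i) sums 0" by simp
  qed
  have "((\<lambda>_. 0::real) \<longlongrightarrow> c (0 + n)) (at (0::real))"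
    by (rule powser_limit_0_strong[of "1::real" "\<lambda>i. c (i+n)" "\<lambda>_. 0::real"]) (use H in auto)
  then show ?case using LIM_const_eq by fastforce
qed

lemma powser_coeff_unique:
  fixes a b :: "nat \<Rightarrow> real"
  assumes "\<And>t. (\<lambda>n. a n * t^n) sums f t" "\<And>t. (\<lambda>n. b n * t^n) sums f t"
  shows "a n = b n"
proof -
  have "\<And>t. (\<lambda>n. (a n - b n) * t^n) sums 0"
  proof -
    fix t
    show "(\<lambda>n. (a n - b n) * t^n) sums 0"
      using sums_diff[OF assms(1)[of t] assms(2)[of t]] by (simp add: algebra_simps)
  qed
  from powser_coeff_zero[OF this] show ?thesis by simp
qed

lemma exp_sums_real: "(\<lambda>n. y^n / fact n) sums exp (y::real)"
  using exp_converges[of y] by (simp add: divide_inverse mult.commute)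

lemma pow_le_exp: "\<bar>x::real\<bar>^k / fact k \<le> exp \<bar>x\<bar>"
proof -
  have "(\<Sum>n\<in>{k}. \<bar>x\<bar>^n / fact n) \<le> suminf (\<lambda>n. \<bar>x\<bar>^n / fact n)"
    by (rule sum_le_suminf) (auto intro: sums_summable[OF exp_sums_real])
  then show ?thesis using sums_unique[OF exp_sums_real[of "\<bar>x\<bar>"]] by simp
qed

lemma partial_exp_le: "\<bar>\<Sum>n<N. (y::real)^n / fact n\<bar> \<le> exp \<bar>y\<bar>"
proof -
  have "\<bar>\<Sum>n<N. y^n / fact n\<bar> \<le> (\<Sum>n<N. \<bar>y\<bar>^n / fact n)"
    by (rule order.trans[OF sum_abs]) (simp add: power_abs)
  also have "\<dots> \<le> suminf (\<lambda>n. \<bar>y\<bar>^n / fact n)"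
    by (rule sum_le_suminf) (auto intro: sums_summable[OF exp_sums_real])
  also have "\<dots> = exp \<bar>y\<bar>" using sums_unique[OF exp_sums_real[of "\<bar>y\<bar>"]] by simp
  finally show ?thesis .
qed

lemma gauss_coeff_sums:
  fixes s t :: real
  shows "(\<lambda>n. (if even n then (s/2)^(n div 2) / fact (n div 2) else 0) * t^n) sums exp (t^2 * s / 2)"
proof -
  have "(\<lambda>n. if even n then (t^2 * s / 2)^(n div 2) / fact (n div 2) else 0)
        sums exp (t^2 * s / 2)"
    using sums_if[OF sums_zero exp_sums_real, of "t^2 * s / 2"] by simp
  moreover have "\<And>n. (if even n then (t^2 * s / 2)^(n div 2) / fact (n div 2) else 0)
     = (if even n then (s/2)^(n div 2) / fact (n div 2) else 0) * t^n"
  proof -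
    fix n :: nat
    show "?thesis n"
    proof (cases "even n")
      case True
      then obtain m where n: "n = 2*m" by blast
      show ?thesis by (simp add: n power_mult_distrib power_mult field_simps flip: power_mult)
    qed simp
  qed
  ultimately show ?thesis by simp
qed

lemma mgf_moments:
  fixes W :: "'w \<Rightarrow> real"
  assumes P: "prob_space M" and Wm[measurable]: "W \<in> borel_measurable M"
    and mgf: "\<And>t. (\<integral>\<^sup>+w. ennreal (exp (t * W w)) \<partial>M) = ennreal (exp (t^2 * s / 2))"
  shows "\<And>k. integrable M (\<lambda>w. W w ^ k)"
    and "(\<integral>w. W w \<partial>M) = 0" "(\<integral>w. W w ^ 2 \<partial>M) = s"
    and "(\<integral>w. W w ^ 3 \<partial>M) = 0" "(\<integral>w. W w ^ 4 \<partial>M) = 3 * s^2"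
proof -
  interpret prob_space M by fact
  have ie: "integrable M (\<lambda>w. exp (t * W w))" for t
    by (rule integrableI_nonneg) (auto simp: mgf)
  have ive: "(\<integral>w. exp (t * W w) \<partial>M) = exp (t^2 * s / 2)" for t
  proof -
    have "ennreal (\<integral>w. exp (t * W w) \<partial>M) = ennreal (exp (t^2 * s / 2))"
      using nn_integral_eq_integral[OF ie, of t] mgf[of t] by simp
    then show ?thesis by (simp add: integral_nonneg_AE)
  qed
  have iabs: "integrable M (\<lambda>w. exp \<bar>t * W w\<bar>)" for t
  proof (rule Bochner_Integration.integrable_bound[OF Bochner_Integration.integrable_add[OF ie[of t] ie[of "-t"]]])
    have e: "exp \<bar>y\<bar> \<le> exp y + exp (- y)" for y :: real
      by (cases "y \<ge> 0") (auto simp: add_increasing2 add_increasing)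
    show "AE w in M. norm (exp \<bar>t * W w\<bar>) \<le> norm (exp (t * W w) + exp (- t * W w))"
    proof (intro AE_I2)
      fix w show "norm (exp \<bar>t * W w\<bar>) \<le> norm (exp (t * W w) + exp (- t * W w))"
        using e[of "t * W w"] by (simp add: add_pos_pos)
    qed
  qed simp
  show ipow: "integrable M (\<lambda>w. W w ^ k)" for k
  proof (rule Bochner_Integration.integrable_bound[OF integrable_mult_right[OF iabs[of 1], of "fact k"]])
    show "AE w in M. norm (W w ^ k) \<le> norm (fact k * exp \<bar>1 * W w\<bar>)"
    proof (intro AE_I2)
      fix w
      have "\<bar>W w\<bar>^k / fact k \<le> exp \<bar>W w\<bar>" by (rule pow_le_exp)
      then have "\<bar>W w\<bar>^k \<le> fact k * exp \<bar>W w\<bar>" by (simp add: field_simps)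
      then show "norm (W w ^ k) \<le> norm (fact k * exp \<bar>1 * W w\<bar>)" by (simp add: power_abs)
    qed
  qed simp
  define a where "a n = (\<integral>w. W w ^ n \<partial>M) / fact n" for n
  have ser: "(\<lambda>n. a n * t^n) sums exp (t^2 * s / 2)" for t
  proof -
    let ?s = "\<lambda>N w. \<Sum>n<N. (t * W w)^n / fact n"
    have "(\<lambda>N. integral\<^sup>L M (?s N)) \<longlonglongrightarrow> integral\<^sup>L M (\<lambda>w. exp (t * W w))"
    proof (rule integral_dominated_convergence[where w="\<lambda>w. exp \<bar>t * W w\<bar>"])
      show "AE w in M. (\<lambda>N. ?s N w) \<longlonglongrightarrow> exp (t * W w)"
        using exp_sums_real unfolding sums_def by simp
      show "AE w in M. norm (?s N w) \<le> exp \<bar>t * W w\<bar>" for N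
        using partial_exp_le by simp
    qed (auto intro: iabs)
    moreover have "integral\<^sup>L M (?s N) = (\<Sum>n<N. a n * t^n)" for N
    proof -
      have "integral\<^sup>L M (?s N) = (\<Sum>n<N. \<integral>w. (t * W w)^n / fact n \<partial>M)"
        by (rule Bochner_Integration.integral_sum) (auto simp: power_mult_distrib intro!: ipow)
      also have "\<dots> = (\<Sum>n<N. a n * t^n)"
        by (intro sum.cong refl) (simp add: a_def power_mult_distrib field_simps)
      finally show ?thesis .
    qed
    ultimately show ?thesis unfolding sums_def ive by simp
  qed
  have co: "a n = (if even n then (s/2)^(n div 2) / fact (n div 2) else 0)" for n
    by (rule powser_coeff_unique[OF ser gauss_coeff_sums])
  have "(\<integral>w. W w ^ n \<partial>M) = fact n * (if even n then (s/2)^(n div 2) / fact (n div 2) else 0)" for n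
    using co[of n] by (simp add: a_def field_simps)
  from this[of 1] this[of 2] this[of 3] this[of 4]
  show "(\<integral>w. W w \<partial>M) = 0" "(\<integral>w. W w ^ 2 \<partial>M) = s"
    "(\<integral>w. W w ^ 3 \<partial>M) = 0" "(\<integral>w. W w ^ 4 \<partial>M) = 3 * s^2"
    by (simp_all add: fact_numeral power2_eq_square)
qed

definition gm :: "'w measure \<Rightarrow> ('w \<Rightarrow> real^'n) \<Rightarrow> real^'n^'n \<Rightarrow> bool" where
  "gm M U K \<longleftrightarrow> U \<in> borel_measurable M \<and> (\<forall>u.
     integrable M (\<lambda>w. u \<bullet> U w) \<and> integrable M (\<lambda>w. (u \<bullet> U w)^2) \<and>
     integrable M (\<lambda>w. (u \<bullet> U w)^3) \<and> integrable M (\<lambda>w. (u \<bullet> U w)^4) \<and>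
     (\<integral>w. u \<bullet> U w \<partial>M) = 0 \<and> (\<integral>w. (u \<bullet> U w)^2 \<partial>M) = u \<bullet> (K *v u) \<and>
     (\<integral>w. (u \<bullet> U w)^3 \<partial>M) = 0 \<and> (\<integral>w. (u \<bullet> U w)^4 \<partial>M) = 3 * (u \<bullet> (K *v u))^2)"

lemma gm_base:
  fixes X :: "'w \<Rightarrow> real^'d" and S :: "real^'d^'d"
  assumes P: "prob_space M" and S: "sym_pos_def_mat S"
    and D: "distributed M lborel X (\<lambda>x. ennreal (mvn_density mu S x))"
  shows "gm M (\<lambda>w. X w - mu) S"
proof -
  have Xm[measurable]: "X \<in> borel_measurable M" using D by (auto simp: distributed_def)
  show ?thesis unfolding gm_def
  proof (intro conjI allI)
    show "(\<lambda>w. X w - mu) \<in> borel_measurable M" by measurable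
    fix u :: "real^'d"
    have Wm: "(\<lambda>w. u \<bullet> (X w - mu)) \<in> borel_measurable M" by measurable
    note mm = mgf_moments[where s="u \<bullet> (S *v u)", OF P Wm mvn_mgf[OF P S D, where u=u]]
    show "integrable M (\<lambda>w. u \<bullet> (X w - mu))" using mm(1)[of 1] by simp
    show "integrable M (\<lambda>w. (u \<bullet> (X w - mu))^2)" using mm(1)[of 2] by simp
    show "integrable M (\<lambda>w. (u \<bullet> (X w - mu))^3)" using mm(1)[of 3] by simp
    show "integrable M (\<lambda>w. (u \<bullet> (X w - mu))^4)" using mm(1)[of 4] by simp
    show "(\<integral>w. u \<bullet> (X w - mu) \<partial>M) = 0" using mm(2) .
    show "(\<integral>w. (u \<bullet> (X w - mu))^2 \<partial>M) = u \<bullet> (S *v u)" using mm(3) .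
    show "(\<integral>w. (u \<bullet> (X w - mu))^3 \<partial>M) = 0" using mm(4) .
    show "(\<integral>w. (u \<bullet> (X w - mu))^4 \<partial>M) = 3 * (u \<bullet> (S *v u))^2" using mm(5) .
  qed
qed

lemma inner_mv_transpose: "(u::real^'m) \<bullet> (A *v x) = (transpose A *v u) \<bullet> x"
  by (metis dot_lmul_matrix transpose_matrix_vector)

lemma gm_linear:
  fixes A :: "real^'n^'m"
  assumes "gm M U K"
  shows "gm M (\<lambda>w. A *v U w) (A ** K ** transpose A)"
proof -
  have Um[measurable]: "U \<in> borel_measurable M" using assms by (simp add: gm_def)
  show ?thesis unfolding gm_def
  proof (intro conjI allI)
    show "(\<lambda>w. A *v U w) \<in> borel_measurable M" by measurable
    fix u :: "real^'m"
    define v where "v = transpose A *v u"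
    have e: "\<And>x. u \<bullet> (A *v x) = v \<bullet> x" unfolding v_def by (rule inner_mv_transpose)
    have q: "u \<bullet> ((A ** K ** transpose A) *v u) = v \<bullet> (K *v v)"
      unfolding v_def by (simp only: matrix_vector_mul_assoc[symmetric] inner_mv_transpose)
    have F: "integrable M (\<lambda>w. v \<bullet> U w) \<and> integrable M (\<lambda>w. (v \<bullet> U w)^2) \<and>
     integrable M (\<lambda>w. (v \<bullet> U w)^3) \<and> integrable M (\<lambda>w. (v \<bullet> U w)^4) \<and>
     (\<integral>w. v \<bullet> U w \<partial>M) = 0 \<and> (\<integral>w. (v \<bullet> U w)^2 \<partial>M) = v \<bullet> (K *v v) \<and>
     (\<integral>w. (v \<bullet> U w)^3 \<partial>M) = 0 \<and> (\<integral>w. (v \<bullet> U w)^4 \<partial>M) = 3 * (v \<bullet> (K *v v))^2"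
      using assms unfolding gm_def by blast
    show "integrable M (\<lambda>w. u \<bullet> (A *v U w))" unfolding e using F by blast
    show "integrable M (\<lambda>w. (u \<bullet> (A *v U w))^2)" unfolding e using F by blast
    show "integrable M (\<lambda>w. (u \<bullet> (A *v U w))^3)" unfolding e using F by blast
    show "integrable M (\<lambda>w. (u \<bullet> (A *v U w))^4)" unfolding e using F by blast
    show "(\<integral>w. u \<bullet> (A *v U w) \<partial>M) = 0" unfolding e using F by blast
    show "(\<integral>w. (u \<bullet> (A *v U w))^2 \<partial>M) = u \<bullet> ((A ** K ** transpose A) *v u)" unfolding e q using F by blast
    show "(\<integral>w. (u \<bullet> (A *v U w))^3 \<partial>M) = 0" unfolding e using F by blast
    show "(\<integral>w. (u \<bullet> (A *v U w))^4 \<partial>M) = 3 * (u \<bullet> ((A ** K ** transpose A) *v u))^2" unfolding e q using F by blast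
  qed
qed

lemma (in prob_space) indep_pow_int:
  fixes a b :: "'a \<Rightarrow> real"
  assumes ind: "indep_var borel a borel b"
    and ia: "integrable M (\<lambda>w. a w ^ p)" and ib: "integrable M (\<lambda>w. b w ^ q)"
  shows "integrable M (\<lambda>w. a w ^ p * b w ^ q)"
    and "(\<integral>w. a w ^ p * b w ^ q \<partial>M) = (\<integral>w. a w ^ p \<partial>M) * (\<integral>w. b w ^ q \<partial>M)"
proof -
  have i2: "indep_var borel (\<lambda>w. a w ^ p) borel (\<lambda>w. b w ^ q)"
    using indep_var_compose[OF ind, of "\<lambda>x. x ^ p" borel "\<lambda>x. x ^ q" borel] by (simp add: comp_def)
  show "integrable M (\<lambda>w. a w ^ p * b w ^ q)" by (rule indep_var_integrable[OF i2 ia ib])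
  show "(\<integral>w. a w ^ p * b w ^ q \<partial>M) = (\<integral>w. a w ^ p \<partial>M) * (\<integral>w. b w ^ q \<partial>M)"
    by (rule indep_var_lebesgue_integral[OF i2 ia ib])
qed

lemma (in prob_space) gm_add:
  assumes U: "gm M U K1" and V: "gm M V K2" and ind: "indep_var borel U borel V"
  shows "gm M (\<lambda>w. U w + V w) (K1 + K2)"
proof -
  have Um[measurable]: "U \<in> borel_measurable M" and Vm[measurable]: "V \<in> borel_measurable M"
    using U V by (auto simp: gm_def)
  show ?thesis unfolding gm_def
  proof (intro conjI allI)
    show "(\<lambda>w. U w + V w) \<in> borel_measurable M" by measurable
    fix u
    define a where "a w = u \<bullet> U w" for w
    define b where "b w = u \<bullet> V w" for w
    have iab: "indep_var borel a borel b"
      using indep_var_compose[OF ind, of "\<lambda>x. u \<bullet> x" borel "\<lambda>x. u \<bullet> x" borel]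
      by (simp add: comp_def a_def[abs_def] b_def[abs_def])
    have ia: "integrable M (\<lambda>w. a w ^ k)" if "k \<le> 4" for k
    proof -
      have "k = 0 \<or> k = 1 \<or> k = 2 \<or> k = 3 \<or> k = 4" using that by auto
      then show ?thesis using U unfolding gm_def a_def by auto
    qed
    have ib: "integrable M (\<lambda>w. b w ^ k)" if "k \<le> 4" for k
    proof -
      have "k = 0 \<or> k = 1 \<or> k = 2 \<or> k = 3 \<or> k = 4" using that by auto
      then show ?thesis using V unfolding gm_def b_def by auto
    qed
    note pi = indep_pow_int[OF iab ia ib]
    have ea: "(\<integral>w. a w ^ 1 \<partial>M) = 0" "(\<integral>w. a w ^ 2 \<partial>M) = u \<bullet> (K1 *v u)"
       "(\<integral>w. a w ^ 3 \<partial>M) = 0" "(\<integral>w. a w ^ 4 \<partial>M) = 3 * (u \<bullet> (K1 *v u))^2"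
       "(\<integral>w. a w ^ 0 \<partial>M) = 1"
      using U unfolding gm_def a_def by (auto simp: prob_space)
    have eb: "(\<integral>w. b w ^ 1 \<partial>M) = 0" "(\<integral>w. b w ^ 2 \<partial>M) = u \<bullet> (K2 *v u)"
       "(\<integral>w. b w ^ 3 \<partial>M) = 0" "(\<integral>w. b w ^ 4 \<partial>M) = 3 * (u \<bullet> (K2 *v u))^2"
       "(\<integral>w. b w ^ 0 \<partial>M) = 1"
      using V unfolding gm_def b_def by (auto simp: prob_space)
    have uk: "u \<bullet> ((K1 + K2) *v u) = u \<bullet> (K1 *v u) + u \<bullet> (K2 *v u)"
      by (simp add: matrix_vector_mult_add_rdistrib inner_add_right)
    have s: "u \<bullet> (U w + V w) = a w + b w" for w by (simp add: a_def b_def inner_add_right)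
    define m where "m p q w = a w ^ p * b w ^ q" for p q w
    have mi[simp]: "p \<le> 4 \<Longrightarrow> q \<le> 4 \<Longrightarrow> integrable M (m p q)" for p q
      unfolding m_def[abs_def] by (rule pi(1))
    have me[simp]: "p \<le> 4 \<Longrightarrow> q \<le> 4 \<Longrightarrow> integral\<^sup>L M (m p q) = (\<integral>w. a w ^ p \<partial>M) * (\<integral>w. b w ^ q \<partial>M)" for p q
      unfolding m_def[abs_def] by (rule pi(2))
    have e1: "(a w + b w) = m 1 0 w + m 0 1 w" for w by (simp add: m_def)
    have e2: "(a w + b w)^2 = m 2 0 w + 2 * m 1 1 w + m 0 2 w" for w
      by (simp add: m_def power2_eq_square algebra_simps)
    have e3: "(a w + b w)^3 = m 3 0 w + 3 * m 2 1 w + 3 * m 1 2 w + m 0 3 w" for w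
      by (simp add: m_def power3_eq_cube power2_eq_square algebra_simps)
    have e4: "(a w + b w)^4 = m 4 0 w + 4 * m 3 1 w + 6 * m 2 2 w + 4 * m 1 3 w + m 0 4 w" for w
      by (simp add: m_def power4_eq_xxxx power3_eq_cube power2_eq_square algebra_simps)
    have e1': "(\<lambda>w. u \<bullet> (U w + V w)) = (\<lambda>w. m 1 0 w + m 0 1 w)" using s e1 by presburger
    have e2': "(\<lambda>w. (u \<bullet> (U w + V w))^2) = (\<lambda>w. m 2 0 w + 2 * m 1 1 w + m 0 2 w)" using s e2 by presburger
    have e3': "(\<lambda>w. (u \<bullet> (U w + V w))^3) = (\<lambda>w. m 3 0 w + 3 * m 2 1 w + 3 * m 1 2 w + m 0 3 w)" using s e3 by presburger
    have e4': "(\<lambda>w. (u \<bullet> (U w + V w))^4) = (\<lambda>w. m 4 0 w + 4 * m 3 1 w + 6 * m 2 2 w + 4 * m 1 3 w + m 0 4 w)" using s e4 by presburger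
    note ea' = ea[simplified] and eb' = eb[simplified]
    show "integrable M (\<lambda>w. u \<bullet> (U w + V w))" unfolding e1' by simp
    show "integrable M (\<lambda>w. (u \<bullet> (U w + V w))^2)" unfolding e2' by simp
    show "integrable M (\<lambda>w. (u \<bullet> (U w + V w))^3)" unfolding e3' by simp
    show "integrable M (\<lambda>w. (u \<bullet> (U w + V w))^4)" unfolding e4' by simp
    show "(\<integral>w. u \<bullet> (U w + V w) \<partial>M) = 0" unfolding e1' by (simp add: ea' eb')
    show "(\<integral>w. (u \<bullet> (U w + V w))^2 \<partial>M) = u \<bullet> ((K1 + K2) *v u)" unfolding e2' uk
      by (simp add: ea' eb')
    show "(\<integral>w. (u \<bullet> (U w + V w))^3 \<partial>M) = 0" unfolding e3'
      by (simp add: ea' eb')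
    show "(\<integral>w. (u \<bullet> (U w + V w))^4 \<partial>M) = 3 * (u \<bullet> ((K1 + K2) *v u))^2" unfolding e4' uk
      by (simp add: ea' eb') (simp add: power2_eq_square algebra_simps)
  qed
qed

lemma (in prob_space) gm_zero: "gm M (\<lambda>w. 0) 0"
  unfolding gm_def by simp

lemma (in prob_space) gm_sum:
  fixes Uf :: "'i \<Rightarrow> 'a \<Rightarrow> real^'n"
  assumes "finite I" and ind: "indep_vars (\<lambda>_. borel) Uf I"
    and g: "\<And>i. i \<in> I \<Longrightarrow> gm M (Uf i) (K i)"
  shows "gm M (\<lambda>w. \<Sum>i\<in>I. Uf i w) (\<Sum>i\<in>I. K i)"
  using assms
proof (induction I rule: finite_induct)
  case empty
  then show ?case using gm_zero by simp
next
  case (insert x F)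
  have indF: "indep_vars (\<lambda>_. borel) Uf F"
    using insert.prems(1) by (rule indep_vars_subset) auto
  have IH: "gm M (\<lambda>w. \<Sum>i\<in>F. Uf i w) (\<Sum>i\<in>F. K i)"
    using insert.IH[OF indF] insert.prems(2) by auto
  have r: "indep_var (PiM {x} (\<lambda>_. borel)) (\<lambda>\<omega>. restrict (\<lambda>i. Uf i \<omega>) {x})
                     (PiM F (\<lambda>_. borel)) (\<lambda>\<omega>. restrict (\<lambda>i. Uf i \<omega>) F)"
    using insert.hyps by (intro indep_var_restrict[OF insert.prems(1)]) auto
  have m1: "(\<lambda>f. f x) \<in> measurable (PiM {x} (\<lambda>_. borel)) (borel :: (real^'n) measure)"
    by (rule measurable_component_singleton) simp
  have m2: "(\<lambda>f. \<Sum>i\<in>F. f i) \<in> measurable (PiM F (\<lambda>_. borel)) (borel :: (real^'n) measure)"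
    by (intro borel_measurable_sum measurable_component_singleton)
  have "indep_var borel (\<lambda>\<omega>. restrict (\<lambda>i. Uf i \<omega>) {x} x) borel (\<lambda>\<omega>. \<Sum>i\<in>F. restrict (\<lambda>i. Uf i \<omega>) F i)"
    using indep_var_compose[OF r m1 m2] by (simp add: comp_def)
  then have ind2: "indep_var borel (Uf x) borel (\<lambda>\<omega>. \<Sum>i\<in>F. Uf i \<omega>)"
    by (simp cong: sum.cong)
  have "gm M (\<lambda>w. Uf x w + (\<Sum>i\<in>F. Uf i w)) (K x + (\<Sum>i\<in>F. K i))"
    by (rule gm_add[OF _ IH ind2]) (use insert.prems(2) in auto)
  then show ?case using insert.hyps by simp
qed

lemma inner_sym_mat:
  fixes K :: "real^'n^'n"
  assumes "transpose K = K"
  shows "v \<bullet> (K *v u) = u \<bullet> (K *v v)"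
  by (metis assms inner_commute inner_mat_sym)

lemma gm_facts:
  assumes "gm M U K"
  shows "U \<in> borel_measurable M"
    "integrable M (\<lambda>w. u \<bullet> U w)" "integrable M (\<lambda>w. (u \<bullet> U w)^2)"
    "integrable M (\<lambda>w. (u \<bullet> U w)^3)" "integrable M (\<lambda>w. (u \<bullet> U w)^4)"
    "(\<integral>w. u \<bullet> U w \<partial>M) = 0" "(\<integral>w. (u \<bullet> U w)^2 \<partial>M) = u \<bullet> (K *v u)"
    "(\<integral>w. (u \<bullet> U w)^3 \<partial>M) = 0" "(\<integral>w. (u \<bullet> U w)^4 \<partial>M) = 3 * (u \<bullet> (K *v u))^2"
  using assms unfolding gm_def by blast+

lemma gm_pol2:
  assumes g: "gm M U K" and K: "transpose K = K"
  shows "integrable M (\<lambda>w. (u \<bullet> U w) * (v \<bullet> U w))"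
    and "(\<integral>w. (u \<bullet> U w) * (v \<bullet> U w) \<partial>M) = u \<bullet> (K *v v)"
proof -
  have e: "(u \<bullet> U w) * (v \<bullet> U w) = (((u + v) \<bullet> U w)^2 - (u \<bullet> U w)^2 - (v \<bullet> U w)^2) / 2" for w
    by (simp add: inner_add_left power2_eq_square algebra_simps)
  note f = gm_facts[OF g]
  show "integrable M (\<lambda>w. (u \<bullet> U w) * (v \<bullet> U w))" unfolding e
    by (intro integrable_divide Bochner_Integration.integrable_diff f)
  have q: "(u + v) \<bullet> (K *v (u + v)) = u \<bullet> (K *v u) + 2 * (u \<bullet> (K *v v)) + v \<bullet> (K *v v)"
    using inner_sym_mat[OF K, of v u]
    by (simp add: matrix_vector_right_distrib inner_add_left inner_add_right)
  show "(\<integral>w. (u \<bullet> U w) * (v \<bullet> U w) \<partial>M) = u \<bullet> (K *v v)" unfolding e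
    by (simp add: Bochner_Integration.integral_diff f q)
qed

lemma gm_pol4:
  assumes g: "gm M U K" and K: "transpose K = K"
  shows "integrable M (\<lambda>w. (u \<bullet> U w)^2 * (v \<bullet> U w)^2)"
    and "(\<integral>w. (u \<bullet> U w)^2 * (v \<bullet> U w)^2 \<partial>M)
         = (u \<bullet> (K *v u)) * (v \<bullet> (K *v v)) + 2 * (u \<bullet> (K *v v))^2"
proof -
  have e: "(u \<bullet> U w)^2 * (v \<bullet> U w)^2 = (((u + v) \<bullet> U w)^4 + ((u - v) \<bullet> U w)^4 - 2 * (u \<bullet> U w)^4 - 2 * (v \<bullet> U w)^4) / 12" for w
    by (simp add: inner_add_left inner_diff_left power4_eq_xxxx power2_eq_square algebra_simps)
  note f = gm_facts[OF g]
  show "integrable M (\<lambda>w. (u \<bullet> U w)^2 * (v \<bullet> U w)^2)" unfolding e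
    by (intro integrable_divide Bochner_Integration.integrable_diff Bochner_Integration.integrable_add integrable_mult_right f)
  have s: "v \<bullet> (K *v u) = u \<bullet> (K *v v)" by (rule inner_sym_mat[OF K])
  have q1: "(u + v) \<bullet> (K *v (u + v)) = u \<bullet> (K *v u) + 2 * (u \<bullet> (K *v v)) + v \<bullet> (K *v v)"
    using s by (simp add: matrix_vector_right_distrib inner_add_left inner_add_right)
  have q2: "(u - v) \<bullet> (K *v (u - v)) = u \<bullet> (K *v u) - 2 * (u \<bullet> (K *v v)) + v \<bullet> (K *v v)"
    using s by (simp add: matrix_vector_mult_diff_distrib inner_diff_left inner_diff_right)
  show "(\<integral>w. (u \<bullet> U w)^2 * (v \<bullet> U w)^2 \<partial>M)
         = (u \<bullet> (K *v u)) * (v \<bullet> (K *v v)) + 2 * (u \<bullet> (K *v v))^2" unfolding e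
    by (simp add: Bochner_Integration.integral_diff Bochner_Integration.integral_add f q1 q2)
       (simp add: power2_eq_square algebra_simps)
qed

lemma psd_cs:
  fixes a b c :: real
  assumes "\<And>t. 0 \<le> t^2 * a + 2 * t * c + b" and "0 \<le> a" "0 \<le> b"
  shows "c^2 \<le> a * b"
proof (cases "a = 0")
  case True
  show ?thesis
  proof (rule ccontr)
    assume "\<not> c^2 \<le> a * b"
    then have c: "c \<noteq> 0" using True by auto
    have "0 \<le> (-(b+1)/(2*c))^2 * a + 2 * (-(b+1)/(2*c)) * c + b" by (rule assms(1))
    then show False using True c by (simp add: field_simps)
  qed
next
  case False
  then have a: "a > 0" using assms by simp
  have "0 \<le> (-c/a)^2 * a + 2 * (-c/a) * c + b" by (rule assms(1))
  then have "0 \<le> (b * a - c^2) / a" using a by (simp add: field_simps power2_eq_square)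
  then show ?thesis using a by (simp add: divide_nonneg_pos field_simps zero_le_divide_iff)
qed

lemma (in prob_space) gm_psd:
  assumes g: "gm M U K"
  shows "0 \<le> u \<bullet> (K *v u)"
proof -
  have "0 \<le> (\<integral>w. (u \<bullet> U w)^2 \<partial>M)" by (rule integral_nonneg_AE) simp
  then show ?thesis using gm_facts(7)[OF g] by simp
qed

lemma (in prob_space) gm_cs:
  assumes g: "gm M U K" and K: "transpose K = K"
  shows "(u \<bullet> (K *v v))^2 \<le> (u \<bullet> (K *v u)) * (v \<bullet> (K *v v))"
proof (rule psd_cs)
  fix t :: real
  have s: "v \<bullet> (K *v u) = u \<bullet> (K *v v)" by (rule inner_sym_mat[OF K])
  have "0 \<le> (t *\<^sub>R u + v) \<bullet> (K *v (t *\<^sub>R u + v))" by (rule gm_psd[OF g])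
  also have "\<dots> = t^2 * (u \<bullet> (K *v u)) + 2 * t * (u \<bullet> (K *v v)) + v \<bullet> (K *v v)"
    using s by (simp add: matrix_vector_right_distrib inner_add_left inner_add_right
        matrix_vector_mult_scaleR power2_eq_square algebra_simps)
  finally show "0 \<le> t^2 * (u \<bullet> (K *v u)) + 2 * t * (u \<bullet> (K *v v)) + v \<bullet> (K *v v)" .
qed (use gm_psd[OF g] in auto)

definition gmm :: "(real^'n) measure \<Rightarrow> real^'n^'n \<Rightarrow> bool" where
  "gmm \<mu> K \<longleftrightarrow> prob_space \<mu> \<and> sets \<mu> = sets borel \<and> transpose K = K \<and>
    (\<forall>u. 0 \<le> u \<bullet> (K *v u)) \<and>
    (\<forall>u v. integrable \<mu> (\<lambda>x. (u \<bullet> x) * (v \<bullet> x)) \<and> (\<integral>x. (u \<bullet> x) * (v \<bullet> x) \<partial>\<mu>) = u \<bullet> (K *v v)) \<and>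
    (\<forall>u v. integrable \<mu> (\<lambda>x. (u \<bullet> x)^2 * (v \<bullet> x)^2) \<and>
       (\<integral>x. (u \<bullet> x)^2 * (v \<bullet> x)^2 \<partial>\<mu>) = (u \<bullet> (K *v u)) * (v \<bullet> (K *v v)) + 2 * (u \<bullet> (K *v v))^2)"

lemma (in prob_space) gmm_distr:
  fixes U :: "'a \<Rightarrow> real^'n"
  assumes g: "gm M U K" and K: "transpose K = K"
  shows "gmm (distr M borel U) K"
proof -
  have Um[measurable]: "U \<in> borel_measurable M" using gm_facts(1)[OF g] .
  show ?thesis unfolding gmm_def
  proof (intro conjI allI)
    show "prob_space (distr M borel U)" by (rule prob_space_distr) simp
    show "sets (distr M borel U) = sets borel" by simp
    show "transpose K = K" by fact
    show "0 \<le> u \<bullet> (K *v u)" for u by (rule gm_psd[OF g])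
    fix u v :: "real^'n"
    show "integrable (distr M borel U) (\<lambda>x. (u \<bullet> x) * (v \<bullet> x))"
      by (subst integrable_distr_eq) (auto intro: gm_pol2(1)[OF g K])
    show "(\<integral>x. (u \<bullet> x) * (v \<bullet> x) \<partial>distr M borel U) = u \<bullet> (K *v v)"
      by (subst integral_distr) (auto intro: gm_pol2(2)[OF g K])
    show "integrable (distr M borel U) (\<lambda>x. (u \<bullet> x)^2 * (v \<bullet> x)^2)"
      by (subst integrable_distr_eq) (auto intro: gm_pol4(1)[OF g K])
    show "(\<integral>x. (u \<bullet> x)^2 * (v \<bullet> x)^2 \<partial>distr M borel U)
        = (u \<bullet> (K *v u)) * (v \<bullet> (K *v v)) + 2 * (u \<bullet> (K *v v))^2"
      by (subst integral_distr) (auto intro: gm_pol4(2)[OF g K])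
  qed
qed

lemma gmm_facts:
  assumes "gmm \<mu> K"
  shows "prob_space \<mu>" "sets \<mu> = sets borel" "transpose K = K" "0 \<le> u \<bullet> (K *v u)"
    "integrable \<mu> (\<lambda>x. (u \<bullet> x) * (v \<bullet> x))" "(\<integral>x. (u \<bullet> x) * (v \<bullet> x) \<partial>\<mu>) = u \<bullet> (K *v v)"
    "integrable \<mu> (\<lambda>x. (u \<bullet> x)^2 * (v \<bullet> x)^2)"
    "(\<integral>x. (u \<bullet> x)^2 * (v \<bullet> x)^2 \<partial>\<mu>) = (u \<bullet> (K *v u)) * (v \<bullet> (K *v v)) + 2 * (u \<bullet> (K *v v))^2"
  using assms unfolding gmm_def by blast+

lemma gmm_cs:
  assumes g: "gmm \<mu> K"
  shows "(u \<bullet> (K *v v))^2 \<le> (u \<bullet> (K *v u)) * (v \<bullet> (K *v v))"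
proof (rule psd_cs)
  fix t :: real
  have s: "v \<bullet> (K *v u) = u \<bullet> (K *v v)" by (rule inner_sym_mat[OF gmm_facts(3)[OF g]])
  have "0 \<le> (t *\<^sub>R u + v) \<bullet> (K *v (t *\<^sub>R u + v))" by (rule gmm_facts(4)[OF g])
  also have "\<dots> = t^2 * (u \<bullet> (K *v u)) + 2 * t * (u \<bullet> (K *v v)) + v \<bullet> (K *v v)"
    using s by (simp add: matrix_vector_right_distrib inner_add_left inner_add_right
        matrix_vector_mult_scaleR power2_eq_square algebra_simps)
  finally show "0 \<le> t^2 * (u \<bullet> (K *v u)) + 2 * t * (u \<bullet> (K *v v)) + v \<bullet> (K *v v)" .
qed (use gmm_facts(4)[OF g] in auto)

lemma gmm_nn2:
  assumes g: "gmm \<mu> K"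
  shows "(\<integral>\<^sup>+x. ennreal ((u \<bullet> x)^2) \<partial>\<mu>) = ennreal (u \<bullet> (K *v u))"
proof -
  have "(\<integral>\<^sup>+x. ennreal ((u \<bullet> x) * (u \<bullet> x)) \<partial>\<mu>) = ennreal (\<integral>x. (u \<bullet> x) * (u \<bullet> x) \<partial>\<mu>)"
    by (rule nn_integral_eq_integral[OF gmm_facts(5)[OF g]]) simp
  then show ?thesis using gmm_facts(6)[OF g, of u u] by (simp add: power2_eq_square)
qed

lemma gmm_nn4:
  assumes g: "gmm \<mu> K"
  shows "(\<integral>\<^sup>+x. ennreal ((u \<bullet> x)^2 * (v \<bullet> x)^2) \<partial>\<mu>) \<le> ennreal (3 * (u \<bullet> (K *v u)) * (v \<bullet> (K *v v)))"
proof -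
  have "(\<integral>\<^sup>+x. ennreal ((u \<bullet> x)^2 * (v \<bullet> x)^2) \<partial>\<mu>) = ennreal (\<integral>x. (u \<bullet> x)^2 * (v \<bullet> x)^2 \<partial>\<mu>)"
    by (rule nn_integral_eq_integral[OF gmm_facts(7)[OF g]]) simp
  also have "\<dots> \<le> ennreal (3 * (u \<bullet> (K *v u)) * (v \<bullet> (K *v v)))"
    unfolding gmm_facts(8)[OF g] using gmm_cs[OF g, of u v] by (intro ennreal_leI) simp
  finally show ?thesis .
qed

lemma axis_inner1: "axis i 1 \<bullet> (x::real^'n) = x $ i"
  by (simp add: inner_axis')

lemma gmm_trace:
  fixes P :: "real^'n^'n"
  assumes g: "gmm \<mu> K"
  shows "integrable \<mu> (\<lambda>x. x \<bullet> (P *v x))" "(\<integral>x. x \<bullet> (P *v x) \<partial>\<mu>) = trace (P ** K)"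
proof -
  have e: "x \<bullet> (P *v x) = (\<Sum>i\<in>UNIV. \<Sum>j\<in>UNIV. P $ i $ j * ((axis i 1 \<bullet> x) * (axis j 1 \<bullet> x)))" for x
    unfolding axis_inner1 by (simp add: inner_vec_def matrix_vector_mult_def sum_distrib_left algebra_simps)
  show "integrable \<mu> (\<lambda>x. x \<bullet> (P *v x))" unfolding e
    by (intro Bochner_Integration.integrable_sum integrable_mult_right gmm_facts(5)[OF g])
  have k: "axis i 1 \<bullet> (K *v axis j 1) = K $ i $ j" for i j
    unfolding axis_inner1 by (simp add: matrix_vector_mult_def axis_def if_distrib cong: if_cong)
  have "(\<integral>x. x \<bullet> (P *v x) \<partial>\<mu>) = (\<Sum>i\<in>UNIV. \<Sum>j\<in>UNIV. P $ i $ j * K $ i $ j)" unfolding e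
    by (simp add: Bochner_Integration.integral_sum gmm_facts(5,6)[OF g] k
         Bochner_Integration.integrable_sum integrable_mult_right)
  also have "\<dots> = trace (P ** K)"
  proof -
    have "K $ i $ j = K $ j $ i" for i j using gmm_facts(3)[OF g]
      by (metis transpose_def vec_lambda_beta)
    then show ?thesis by (simp add: trace_def matrix_matrix_mult_def)
  qed
  finally show "(\<integral>x. x \<bullet> (P *v x) \<partial>\<mu>) = trace (P ** K)" .
qed

lemma gmm_nn4':
  assumes g: "gmm \<mu> K"
  shows "(\<integral>\<^sup>+x. ennreal ((u \<bullet> x)^2) * ennreal ((v \<bullet> x)^2) \<partial>\<mu>) \<le> ennreal (3 * (u \<bullet> (K *v u)) * (v \<bullet> (K *v v)))"
  using gmm_nn4[OF g, of u v] by (simp add: ennreal_mult'')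

lemma gmm_qT:
  assumes g: "gmm \<mu> K" and T: "transpose T = T"
  shows "(\<integral>\<^sup>+x. ennreal ((T *v x) \<bullet> (K *v (T *v x))) \<partial>\<mu>) = ennreal (trace (T ** K ** T ** K))"
proof -
  have e: "(T *v x) \<bullet> (K *v (T *v x)) = x \<bullet> ((T ** K ** T) *v x)" for x
    using inner_mat_sym[OF T, of x "K *v (T *v x)"] by (simp add: matrix_vector_mul_assoc matrix_mul_assoc)
  have "(\<integral>\<^sup>+x. ennreal (x \<bullet> ((T ** K ** T) *v x)) \<partial>\<mu>) = ennreal (\<integral>x. x \<bullet> ((T ** K ** T) *v x) \<partial>\<mu>)"
    by (rule nn_integral_eq_integral[OF gmm_trace(1)[OF g]]) (use gmm_facts(4)[OF g, of "T *v _"] e in \<open>auto intro!: AE_I2 simp del: matrix_vector_mul_assoc\<close>)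
  then show ?thesis unfolding e gmm_trace(2)[OF g] by (simp add: matrix_mul_assoc)
qed

lemma gmm_q_nn:
  assumes g: "gmm \<mu> K" and T: "transpose T = T"
  shows "ennreal ((T *v y) \<bullet> (K *v (T *v y))) = (\<integral>\<^sup>+x. ennreal (((T *v x) \<bullet> y)^2) \<partial>\<mu>)"
proof -
  have "((T *v x) \<bullet> y) = (T *v y) \<bullet> x" for x by (metis T inner_commute inner_mat_sym)
  then show ?thesis using gmm_nn2[OF g, of "T *v y"] by simp
qed

lemma trace_nonneg_gmm:
  assumes g: "gmm \<mu> K" and T: "transpose T = T"
  shows "0 \<le> trace (T ** K ** T ** K)"
proof -
  have e: "(T *v x) \<bullet> (K *v (T *v x)) = x \<bullet> ((T ** K ** T) *v x)" for x
    using inner_mat_sym[OF T, of x "K *v (T *v x)"] by (simp add: matrix_vector_mul_assoc matrix_mul_assoc)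
  have "0 \<le> (\<integral>x. x \<bullet> ((T ** K ** T) *v x) \<partial>\<mu>)"
    by (rule integral_nonneg_AE) (use gmm_facts(4)[OF g, of "T *v _"] e in \<open>auto intro!: AE_I2 simp del: matrix_vector_mul_assoc\<close>)
  then show ?thesis unfolding gmm_trace(2)[OF g] by (simp add: matrix_mul_assoc)
qed

lemma tonelli_bound:
  fixes T K :: "real^'n^'n"
  assumes gA: "gmm \<mu>A K" and gB: "gmm \<mu>B K" and gC: "gmm \<mu>C K" and T: "transpose T = T"
  shows "(\<integral>\<^sup>+z. ennreal (((fst z \<bullet> (T *v fst (snd z))) * (fst (snd z) \<bullet> (T *v snd (snd z)))
             * (snd (snd z) \<bullet> (T *v fst z)))^2) \<partial>(\<mu>A \<Otimes>\<^sub>M (\<mu>B \<Otimes>\<^sub>M \<mu>C)))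
         \<le> ennreal (27 * (trace (T ** K ** T ** K))^3)"
proof -
  note [measurable_cong] = gmm_facts(2)[OF gA] gmm_facts(2)[OF gB] gmm_facts(2)[OF gC]
  interpret A: prob_space \<mu>A using gmm_facts(1)[OF gA] .
  interpret B: prob_space \<mu>B using gmm_facts(1)[OF gB] .
  interpret C: prob_space \<mu>C using gmm_facts(1)[OF gC] .
  interpret BC: pair_prob_space \<mu>B \<mu>C by unfold_locales
  interpret ABC: pair_prob_space \<mu>A "\<mu>B \<Otimes>\<^sub>M \<mu>C" by unfold_locales
  interpret AB: pair_prob_space \<mu>A \<mu>B by unfold_locales
  interpret CA: pair_prob_space \<mu>C \<mu>A by unfold_locales
  interpret CB: pair_prob_space \<mu>C \<mu>B by unfold_locales
  define J where "J = trace (T ** K ** T ** K)"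
  define qT where "qT y = (T *v y) \<bullet> (K *v (T *v y))" for y
  have J0: "0 \<le> J" unfolding J_def by (rule trace_nonneg_gmm[OF gA T])
  have q0: "0 \<le> qT y" for y unfolding qT_def by (rule gmm_facts(4)[OF gA])
  have Ts: "x \<bullet> (T *v y) = (T *v x) \<bullet> y" for x y by (rule inner_mat_sym[OF T])
  have F1A: "ennreal (qT y) = (\<integral>\<^sup>+x. ennreal (((T *v x) \<bullet> y)^2) \<partial>\<mu>A)" for y
    unfolding qT_def by (rule gmm_q_nn[OF gA T])
  have F1B: "ennreal (qT y) = (\<integral>\<^sup>+x. ennreal (((T *v x) \<bullet> y)^2) \<partial>\<mu>B)" for y
    unfolding qT_def by (rule gmm_q_nn[OF gB T])
  have F2A: "(\<integral>\<^sup>+x. ennreal (qT x) \<partial>\<mu>A) = ennreal J"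
    unfolding qT_def J_def by (rule gmm_qT[OF gA T])
  have F2B: "(\<integral>\<^sup>+x. ennreal (qT x) \<partial>\<mu>B) = ennreal J"
    unfolding qT_def J_def by (rule gmm_qT[OF gB T])
  have F3: "(\<integral>\<^sup>+x. ennreal (((T *v y) \<bullet> x)^2) * ennreal (((T *v z) \<bullet> x)^2) \<partial>\<mu>) \<le> ennreal (3 * qT y * qT z)"
    if "gmm \<mu> K" for \<mu> y z
    using gmm_nn4'[OF that, of "T *v y" "T *v z"] unfolding qT_def by simp
  have qTm[measurable]: "(\<lambda>x. qT (f x)) \<in> borel_measurable N" if [measurable]: "f \<in> borel_measurable N" for f and N :: "'z measure"
    unfolding qT_def by measurable

  let ?h = "\<lambda>z. ennreal (((fst z \<bullet> (T *v fst (snd z))) * (fst (snd z) \<bullet> (T *v snd (snd z)))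
             * (snd (snd z) \<bullet> (T *v fst z)))^2)"
  have step1: "(\<integral>\<^sup>+z. ?h z \<partial>(\<mu>A \<Otimes>\<^sub>M (\<mu>B \<Otimes>\<^sub>M \<mu>C)))
      = (\<integral>\<^sup>+y. (\<integral>\<^sup>+a. ?h (a, y) \<partial>\<mu>A) \<partial>(\<mu>B \<Otimes>\<^sub>M \<mu>C))"
    by (rule ABC.nn_integral_snd[symmetric]) measurable
  have step2: "(\<integral>\<^sup>+a. ?h (a, y) \<partial>\<mu>A) \<le> ennreal ((fst y \<bullet> (T *v snd y))^2) * ennreal (3 * qT (fst y) * qT (snd y))" for y
  proof -
    have "(\<integral>\<^sup>+a. ?h (a, y) \<partial>\<mu>A) = (\<integral>\<^sup>+a. ennreal ((fst y \<bullet> (T *v snd y))^2) *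
        (ennreal (((T *v fst y) \<bullet> a)^2) * ennreal (((T *v snd y) \<bullet> a)^2)) \<partial>\<mu>A)"
    proof (intro nn_integral_cong)
      fix a
      have e1: "a \<bullet> (T *v fst y) = (T *v fst y) \<bullet> a" by (rule inner_commute)
      have e2: "snd y \<bullet> (T *v a) = (T *v snd y) \<bullet> a" by (rule Ts)
      show "?h (a, y) = ennreal ((fst y \<bullet> (T *v snd y))^2) *
        (ennreal (((T *v fst y) \<bullet> a)^2) * ennreal (((T *v snd y) \<bullet> a)^2))"
        by (simp add: e1 e2 ennreal_mult'' power_mult_distrib mult_ac)
    qed
    also have "\<dots> = ennreal ((fst y \<bullet> (T *v snd y))^2) *
        (\<integral>\<^sup>+a. ennreal (((T *v fst y) \<bullet> a)^2) * ennreal (((T *v snd y) \<bullet> a)^2) \<partial>\<mu>A)"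
      by (rule nn_integral_cmult) measurable
    also have "\<dots> \<le> ennreal ((fst y \<bullet> (T *v snd y))^2) * ennreal (3 * qT (fst y) * qT (snd y))"
      by (intro mult_left_mono F3[OF gA]) simp
    finally show ?thesis .
  qed
  have step3: "(\<integral>\<^sup>+y. ennreal ((fst y \<bullet> (T *v snd y))^2) * ennreal (3 * qT (fst y) * qT (snd y)) \<partial>(\<mu>B \<Otimes>\<^sub>M \<mu>C))
     = (\<integral>\<^sup>+c. (\<integral>\<^sup>+b. ennreal ((b \<bullet> (T *v c))^2) * ennreal (3 * qT b * qT c) \<partial>\<mu>B) \<partial>\<mu>C)"
    by (subst BC.nn_integral_snd[symmetric]) measurable
  have step4: "(\<integral>\<^sup>+b. ennreal ((b \<bullet> (T *v c))^2) * ennreal (3 * qT b * qT c) \<partial>\<mu>B)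
      \<le> ennreal (9 * J) * (ennreal (qT c) * ennreal (qT c))" for c
  proof -
    have "(\<integral>\<^sup>+b. ennreal ((b \<bullet> (T *v c))^2) * ennreal (3 * qT b * qT c) \<partial>\<mu>B)
        = (\<integral>\<^sup>+b. ennreal (3 * qT c) * (ennreal (((T *v c) \<bullet> b)^2) * ennreal (qT b)) \<partial>\<mu>B)"
    proof (intro nn_integral_cong)
      fix b
      have e: "b \<bullet> (T *v c) = (T *v c) \<bullet> b" by (rule inner_commute)
      show "ennreal ((b \<bullet> (T *v c))^2) * ennreal (3 * qT b * qT c)
          = ennreal (3 * qT c) * (ennreal (((T *v c) \<bullet> b)^2) * ennreal (qT b))"
        unfolding e using q0[of b] q0[of c]
        by (simp add: ennreal_mult'' ennreal_mult' mult_ac)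
    qed
    also have "\<dots> = ennreal (3 * qT c) * (\<integral>\<^sup>+b. ennreal (((T *v c) \<bullet> b)^2) * ennreal (qT b) \<partial>\<mu>B)"
      by (rule nn_integral_cmult) measurable
    also have "(\<integral>\<^sup>+b. ennreal (((T *v c) \<bullet> b)^2) * ennreal (qT b) \<partial>\<mu>B)
        = (\<integral>\<^sup>+b. (\<integral>\<^sup>+a. ennreal (((T *v c) \<bullet> b)^2) * ennreal (((T *v a) \<bullet> b)^2) \<partial>\<mu>A) \<partial>\<mu>B)"
    proof (intro nn_integral_cong)
      fix b
      show "ennreal (((T *v c) \<bullet> b)^2) * ennreal (qT b)
          = (\<integral>\<^sup>+a. ennreal (((T *v c) \<bullet> b)^2) * ennreal (((T *v a) \<bullet> b)^2) \<partial>\<mu>A)"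
        unfolding F1A[of b] by (rule nn_integral_cmult[symmetric]) measurable
    qed
    also have "\<dots> = (\<integral>\<^sup>+a. (\<integral>\<^sup>+b. ennreal (((T *v c) \<bullet> b)^2) * ennreal (((T *v a) \<bullet> b)^2) \<partial>\<mu>B) \<partial>\<mu>A)"
      by (rule AB.Fubini') measurable
    also have "\<dots> \<le> (\<integral>\<^sup>+a. ennreal (3 * qT c) * ennreal (qT a) \<partial>\<mu>A)"
    proof (rule nn_integral_mono)
      fix a
      show "(\<integral>\<^sup>+b. ennreal (((T *v c) \<bullet> b)^2) * ennreal (((T *v a) \<bullet> b)^2) \<partial>\<mu>B) \<le> ennreal (3 * qT c) * ennreal (qT a)"
      proof -
        have eq: "ennreal (3 * qT c * qT a) = ennreal (3 * qT c) * ennreal (qT a)"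
          using q0[of a] by (rule ennreal_mult'')
        show ?thesis using F3[OF gB, of c a] unfolding eq .
      qed
    qed
    also have "\<dots> = ennreal (3 * qT c) * ennreal J"
      by (subst nn_integral_cmult) (auto simp: F2A)
    finally have "(\<integral>\<^sup>+b. ennreal ((b \<bullet> (T *v c))^2) * ennreal (3 * qT b * qT c) \<partial>\<mu>B)
       \<le> ennreal (3 * qT c) * (ennreal (3 * qT c) * ennreal J)" by (simp add: mult_left_mono)
    also have "\<dots> = ennreal (9 * J) * (ennreal (qT c) * ennreal (qT c))"
      using q0[of c] J0 by (simp add: ennreal_mult'' ennreal_mult' mult_ac)
    finally show ?thesis .
  qed
  have step5: "(\<integral>\<^sup>+c. ennreal (qT c) * ennreal (qT c) \<partial>\<mu>C) \<le> ennreal (3 * J^2)"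
  proof -
    have "(\<integral>\<^sup>+c. ennreal (qT c) * ennreal (qT c) \<partial>\<mu>C)
        = (\<integral>\<^sup>+c. (\<integral>\<^sup>+a. ennreal (((T *v a) \<bullet> c)^2) * ennreal (qT c) \<partial>\<mu>A) \<partial>\<mu>C)"
    proof (intro nn_integral_cong)
      fix c
      show "ennreal (qT c) * ennreal (qT c) = (\<integral>\<^sup>+a. ennreal (((T *v a) \<bullet> c)^2) * ennreal (qT c) \<partial>\<mu>A)"
        by (subst nn_integral_multc) (measurable, simp add: F1A[symmetric])
    qed
    also have "\<dots> = (\<integral>\<^sup>+a. (\<integral>\<^sup>+c. ennreal (((T *v a) \<bullet> c)^2) * ennreal (qT c) \<partial>\<mu>C) \<partial>\<mu>A)"
      by (rule CA.Fubini'[symmetric]) measurable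
    also have "\<dots> \<le> (\<integral>\<^sup>+a. ennreal (3 * qT a) * ennreal J \<partial>\<mu>A)"
    proof (rule nn_integral_mono)
      fix a
      have "(\<integral>\<^sup>+c. ennreal (((T *v a) \<bullet> c)^2) * ennreal (qT c) \<partial>\<mu>C)
          = (\<integral>\<^sup>+c. (\<integral>\<^sup>+b. ennreal (((T *v a) \<bullet> c)^2) * ennreal (((T *v b) \<bullet> c)^2) \<partial>\<mu>B) \<partial>\<mu>C)"
      proof (intro nn_integral_cong)
        fix c
        show "ennreal (((T *v a) \<bullet> c)^2) * ennreal (qT c)
          = (\<integral>\<^sup>+b. ennreal (((T *v a) \<bullet> c)^2) * ennreal (((T *v b) \<bullet> c)^2) \<partial>\<mu>B)"
          unfolding F1B[of c] by (rule nn_integral_cmult[symmetric]) measurable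
      qed
      also have "\<dots> = (\<integral>\<^sup>+b. (\<integral>\<^sup>+c. ennreal (((T *v a) \<bullet> c)^2) * ennreal (((T *v b) \<bullet> c)^2) \<partial>\<mu>C) \<partial>\<mu>B)"
        by (rule CB.Fubini'[symmetric]) measurable
      also have "\<dots> \<le> (\<integral>\<^sup>+b. ennreal (3 * qT a) * ennreal (qT b) \<partial>\<mu>B)"
      proof (rule nn_integral_mono)
        fix b
        have eq: "ennreal (3 * qT a * qT b) = ennreal (3 * qT a) * ennreal (qT b)"
          using q0[of b] by (rule ennreal_mult'')
        show "(\<integral>\<^sup>+c. ennreal (((T *v a) \<bullet> c)^2) * ennreal (((T *v b) \<bullet> c)^2) \<partial>\<mu>C) \<le> ennreal (3 * qT a) * ennreal (qT b)"
          using F3[OF gC, of a b] unfolding eq .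
      qed
      also have "\<dots> = ennreal (3 * qT a) * ennreal J"
        by (subst nn_integral_cmult) (auto simp: F2B)
      finally show "(\<integral>\<^sup>+c. ennreal (((T *v a) \<bullet> c)^2) * ennreal (qT c) \<partial>\<mu>C) \<le> ennreal (3 * qT a) * ennreal J" .
    qed
    also have "\<dots> = ennreal (3 * J) * (\<integral>\<^sup>+a. ennreal (qT a) \<partial>\<mu>A)"
    proof -
      have "(\<integral>\<^sup>+a. ennreal (3 * qT a) * ennreal J \<partial>\<mu>A) = (\<integral>\<^sup>+a. ennreal (3 * J) * ennreal (qT a) \<partial>\<mu>A)"
        using q0 J0 by (intro nn_integral_cong) (simp add: ennreal_mult'' ennreal_mult' mult_ac)
      also have "\<dots> = ennreal (3 * J) * (\<integral>\<^sup>+a. ennreal (qT a) \<partial>\<mu>A)"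
        by (rule nn_integral_cmult) measurable
      finally show ?thesis .
    qed
    also have "\<dots> = ennreal (3 * J^2)"
      using J0 by (simp add: F2A ennreal_mult'' ennreal_mult' power2_eq_square mult_ac)
    finally show ?thesis .
  qed
  have "(\<integral>\<^sup>+z. ?h z \<partial>(\<mu>A \<Otimes>\<^sub>M (\<mu>B \<Otimes>\<^sub>M \<mu>C)))
     \<le> (\<integral>\<^sup>+y. ennreal ((fst y \<bullet> (T *v snd y))^2) * ennreal (3 * qT (fst y) * qT (snd y)) \<partial>(\<mu>B \<Otimes>\<^sub>M \<mu>C))"
    unfolding step1 by (intro nn_integral_mono step2)
  also have "\<dots> \<le> (\<integral>\<^sup>+c. ennreal (9 * J) * (ennreal (qT c) * ennreal (qT c)) \<partial>\<mu>C)"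
    unfolding step3 by (intro nn_integral_mono step4)
  also have "\<dots> = ennreal (9 * J) * (\<integral>\<^sup>+c. ennreal (qT c) * ennreal (qT c) \<partial>\<mu>C)"
    by (rule nn_integral_cmult) measurable
  also have "\<dots> \<le> ennreal (9 * J) * ennreal (3 * J^2)"
    by (intro mult_left_mono step5) simp
  also have "\<dots> = ennreal (27 * J^3)"
    using J0 by (simp add: ennreal_mult'' ennreal_mult' power3_eq_cube power2_eq_square mult_ac)
  finally show ?thesis unfolding J_def .
qed

lemma abs_le_1_sq: "ennreal \<bar>x::real\<bar> \<le> 1 + ennreal (x^2)"
proof -
  have sq: "x^2 = \<bar>x\<bar> * \<bar>x\<bar>" by (simp add: power2_eq_square)
  have "\<bar>x\<bar> \<le> 1 + x^2"
  proof (cases "\<bar>x\<bar> \<le> 1")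
    case True then show ?thesis by (simp add: add_increasing2)
  next
    case False
    then have "\<bar>x\<bar> * 1 \<le> \<bar>x\<bar> * \<bar>x\<bar>" by (intro mult_left_mono) auto
    then show ?thesis unfolding sq by simp
  qed
  then have "ennreal \<bar>x\<bar> \<le> ennreal (1 + x^2)" by (rule ennreal_leI)
  also have "ennreal (1 + x^2) = 1 + ennreal (x^2)" by (subst ennreal_plus) auto
  finally show ?thesis .
qed

lemma fubini_mean:
  fixes T K :: "real^'n^'n"
  assumes gA: "gmm \<mu>A K" and gB: "gmm \<mu>B K" and gC: "gmm \<mu>C K" and T: "transpose T = T"
  defines "H \<equiv> \<lambda>z. (fst z \<bullet> (T *v fst (snd z))) * (fst (snd z) \<bullet> (T *v snd (snd z)))
             * (snd (snd z) \<bullet> (T *v fst z))"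
  shows "integrable (\<mu>A \<Otimes>\<^sub>M (\<mu>B \<Otimes>\<^sub>M \<mu>C)) H"
    and "(\<integral>z. H z \<partial>(\<mu>A \<Otimes>\<^sub>M (\<mu>B \<Otimes>\<^sub>M \<mu>C))) = trace (T ** K ** T ** K ** T ** K)"
proof -
  note [measurable_cong] = gmm_facts(2)[OF gA] gmm_facts(2)[OF gB] gmm_facts(2)[OF gC]
  interpret A: prob_space \<mu>A using gmm_facts(1)[OF gA] .
  interpret B: prob_space \<mu>B using gmm_facts(1)[OF gB] .
  interpret C: prob_space \<mu>C using gmm_facts(1)[OF gC] .
  interpret BC: pair_prob_space \<mu>B \<mu>C by unfold_locales
  interpret ABC: pair_prob_space \<mu>A "\<mu>B \<Otimes>\<^sub>M \<mu>C" by unfold_locales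
  have Hm[measurable]: "H \<in> borel_measurable (\<mu>A \<Otimes>\<^sub>M (\<mu>B \<Otimes>\<^sub>M \<mu>C))"
    unfolding H_def by measurable
  have "(\<integral>\<^sup>+z. ennreal (norm (H z)) \<partial>(\<mu>A \<Otimes>\<^sub>M (\<mu>B \<Otimes>\<^sub>M \<mu>C)))
      \<le> (\<integral>\<^sup>+z. 1 + ennreal ((H z)^2) \<partial>(\<mu>A \<Otimes>\<^sub>M (\<mu>B \<Otimes>\<^sub>M \<mu>C)))"
    by (intro nn_integral_mono) (simp add: abs_le_1_sq)
  also have "\<dots> = 1 + (\<integral>\<^sup>+z. ennreal ((H z)^2) \<partial>(\<mu>A \<Otimes>\<^sub>M (\<mu>B \<Otimes>\<^sub>M \<mu>C)))"
    by (subst nn_integral_add) (auto simp: ABC.emeasure_space_1)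
  also have "\<dots> \<le> 1 + ennreal (27 * (trace (T ** K ** T ** K))^3)"
    using tonelli_bound[OF gA gB gC T] unfolding H_def by (intro add_left_mono) simp
  also have "\<dots> < \<infinity>" by simp
  finally show Hi: "integrable (\<mu>A \<Otimes>\<^sub>M (\<mu>B \<Otimes>\<^sub>M \<mu>C)) H"
    by (intro integrableI_bounded Hm)
  have Ts: "x \<bullet> (T *v y) = (T *v x) \<bullet> y" for x y by (rule inner_mat_sym[OF T])
  define g where "g y = (fst y \<bullet> (T *v snd y)) * ((T *v fst y) \<bullet> (K *v (T *v snd y)))" for y
  have Hi': "integrable (\<mu>A \<Otimes>\<^sub>M (\<mu>B \<Otimes>\<^sub>M \<mu>C)) (case_prod (\<lambda>a y. H (a, y)))"
    using Hi by simp
  have inner: "(\<integral>a. H (a, y) \<partial>\<mu>A) = g y" for y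
  proof -
    have "(\<integral>a. H (a, y) \<partial>\<mu>A) = (\<integral>a. (fst y \<bullet> (T *v snd y)) * (((T *v fst y) \<bullet> a) * ((T *v snd y) \<bullet> a)) \<partial>\<mu>A)"
    proof (intro Bochner_Integration.integral_cong refl)
      fix a
      have e1: "a \<bullet> (T *v fst y) = (T *v fst y) \<bullet> a" by (rule inner_commute)
      have e2: "snd y \<bullet> (T *v a) = (T *v snd y) \<bullet> a" by (rule Ts)
      show "H (a, y) = (fst y \<bullet> (T *v snd y)) * (((T *v fst y) \<bullet> a) * ((T *v snd y) \<bullet> a))"
        unfolding H_def by (simp add: e1 e2 mult_ac)
    qed
    also have "\<dots> = g y"
      unfolding g_def by (simp add: gmm_facts(6)[OF gA])
    finally show ?thesis .
  qed
  have e1: "(\<integral>z. H z \<partial>(\<mu>A \<Otimes>\<^sub>M (\<mu>B \<Otimes>\<^sub>M \<mu>C))) = (\<integral>y. g y \<partial>(\<mu>B \<Otimes>\<^sub>M \<mu>C))"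
    using ABC.integral_snd[OF Hi'] inner by simp
  have gi: "integrable (\<mu>B \<Otimes>\<^sub>M \<mu>C) g"
    using ABC.integrable_snd[OF Hi'] inner by simp
  have gi': "integrable (\<mu>B \<Otimes>\<^sub>M \<mu>C) (case_prod (\<lambda>b c. g (b, c)))" using gi by simp
  have inner2: "(\<integral>b. g (b, c) \<partial>\<mu>B) = c \<bullet> ((T ** K ** T ** K ** T) *v c)" for c
  proof -
    have "(\<integral>b. g (b, c) \<partial>\<mu>B) = (\<integral>b. ((T *v c) \<bullet> b) * ((T *v (K *v (T *v c))) \<bullet> b) \<partial>\<mu>B)"
    proof (intro Bochner_Integration.integral_cong refl)
      fix b
      have e1: "b \<bullet> (T *v c) = (T *v c) \<bullet> b" by (rule inner_commute)
      have e2: "(T *v b) \<bullet> (K *v (T *v c)) = (T *v (K *v (T *v c))) \<bullet> b"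
        by (metis Ts inner_commute)
      show "g (b, c) = ((T *v c) \<bullet> b) * ((T *v (K *v (T *v c))) \<bullet> b)"
        unfolding g_def by (simp add: e1 e2)
    qed
    also have "\<dots> = (T *v c) \<bullet> (K *v (T *v (K *v (T *v c))))" by (simp add: gmm_facts(6)[OF gB])
    also have "\<dots> = c \<bullet> ((T ** K ** T ** K ** T) *v c)"
      by (simp add: Ts[symmetric] matrix_vector_mul_assoc matrix_mul_assoc)
    finally show ?thesis .
  qed
  have e2: "(\<integral>y. g y \<partial>(\<mu>B \<Otimes>\<^sub>M \<mu>C)) = (\<integral>c. c \<bullet> ((T ** K ** T ** K ** T) *v c) \<partial>\<mu>C)"
    using BC.integral_snd[OF gi'] inner2 by simp
  show "(\<integral>z. H z \<partial>(\<mu>A \<Otimes>\<^sub>M (\<mu>B \<Otimes>\<^sub>M \<mu>C))) = trace (T ** K ** T ** K ** T ** K)"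
    unfolding e1 e2 gmm_trace(2)[OF gC] ..
qed

definition Zv :: "('g::finite \<Rightarrow> nat) \<Rightarrow> ('g \<Rightarrow> nat \<Rightarrow> 'w \<Rightarrow> real^'d::finite)
     \<Rightarrow> ('g \<Rightarrow> nat \<Rightarrow> nat) \<Rightarrow> nat \<Rightarrow> nat \<Rightarrow> 'w \<Rightarrow> real^('g \<times> 'd)" where
  "Zv n X l p q w = (\<chi> k. Zblk n X l p q (fst k) w $ snd k)"

lemma sum_UNIV_pair: "(\<Sum>k\<in>(UNIV::('a::finite \<times> 'b::finite) set). f k) = (\<Sum>i\<in>UNIV. \<Sum>j\<in>UNIV. f (i, j))"
  by (subst UNIV_Times_UNIV[symmetric]) (simp only: sum.cartesian_product case_prod_eta)

lemma lam_inner: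
  "Lam n X TW TS l p q r s w = Zv n X l p q w \<bullet> (kron TW TS *v Zv n X l r s w)"
proof -
  let ?Z = "\<lambda>i. Zblk n X l p q i w" and ?Z' = "\<lambda>j. Zblk n X l r s j w"
  have "Zv n X l p q w \<bullet> (kron TW TS *v Zv n X l r s w)
      = (\<Sum>i\<in>UNIV. \<Sum>a\<in>UNIV. ?Z i $ a * (\<Sum>j\<in>UNIV. \<Sum>b\<in>UNIV. TW $ i $ j * TS $ a $ b * ?Z' j $ b))"
    by (simp add: inner_vec_def matrix_vector_mult_def Zv_def kron_def sum_UNIV_pair)
  also have "\<dots> = (\<Sum>i\<in>UNIV. \<Sum>a\<in>UNIV. \<Sum>j\<in>UNIV. \<Sum>b\<in>UNIV. TW $ i $ j * (?Z i $ a * (TS $ a $ b * ?Z' j $ b)))"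
    by (simp add: sum_distrib_left mult_ac)
  also have "\<dots> = (\<Sum>i\<in>UNIV. \<Sum>j\<in>UNIV. \<Sum>a\<in>UNIV. \<Sum>b\<in>UNIV. TW $ i $ j * (?Z i $ a * (TS $ a $ b * ?Z' j $ b)))"
    by (rule sum.cong[OF refl], rule sum.swap)
  also have "\<dots> = (\<Sum>i\<in>UNIV. \<Sum>j\<in>UNIV. TW $ i $ j * (\<Sum>a\<in>UNIV. ?Z i $ a * (\<Sum>b\<in>UNIV. TS $ a $ b * ?Z' j $ b)))"
    by (simp add: sum_distrib_left)
  also have "\<dots> = Lam n X TW TS l p q r s w"
    by (simp add: Lam_def inner_vec_def matrix_vector_mult_def)
  finally show ?thesis ..
qed

definition emb :: "'g::finite \<Rightarrow> real^'d::finite^('g \<times> 'd)" where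
  "emb i = (\<chi> k b. if fst k = i \<and> snd k = b then 1 else 0)"

lemma if01_mult: "(if P then 1 else 0) * (x::real) = (if P then x else 0)" "x * (if P then 1 else 0) = (if P then x else 0)"
  by simp_all

lemma emb_mult: "(emb i ** S) $ k $ b = (if fst k = i then S $ snd k $ b else 0)"
  by (auto simp: emb_def matrix_matrix_mult_def if01_mult)

lemma emb_S_emb:
  "(emb i ** S ** transpose (emb i)) $ k $ k' = (if fst k = i \<and> fst k' = i then S $ snd k $ snd k' else 0)"
proof -
  have "(emb i ** S ** transpose (emb i)) $ k $ k' = (\<Sum>b\<in>UNIV. (emb i ** S) $ k $ b * emb i $ k' $ b)"
    by (simp add: matrix_matrix_mult_def transpose_def)
  also have "\<dots> = (if fst k = i \<and> fst k' = i then S $ snd k $ snd k' else 0)"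
    unfolding emb_mult by (cases "fst k = i") (auto simp: emb_def if01_mult)
  finally show ?thesis .
qed

lemma emb_mv: "(emb i *v v) $ k = (if fst k = i then v $ snd k else 0)"
  by (auto simp: emb_def matrix_vector_mult_def if01_mult)

definition sc :: "('g::finite \<Rightarrow> nat) \<Rightarrow> 'g \<Rightarrow> real" where
  "sc n i = sqrt (real (\<Sum>k\<in>UNIV. n k) / real (n i))"

definition Mo :: "('g::finite \<Rightarrow> nat) \<Rightarrow> ('g \<Rightarrow> nat \<Rightarrow> nat) \<Rightarrow> nat \<Rightarrow> 'g \<times> nat \<Rightarrow> real^'d::finite^('g \<times> 'd)" where
  "Mo n l p ob = (if snd ob = l (fst ob) p then sc n (fst ob) else - sc n (fst ob)) *\<^sub>R emb (fst ob)"

definition Spq :: "('g::finite \<Rightarrow> nat \<Rightarrow> nat) \<Rightarrow> nat \<Rightarrow> nat \<Rightarrow> ('g \<times> nat) set" where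
  "Spq l p q = (\<lambda>(i, t). (i, l i t)) ` (UNIV \<times> {p, q})"

lemma Spq_inj:
  assumes "\<And>i. l i p \<noteq> l i q"
  shows "inj_on (\<lambda>(i, t). (i, l i t)) (UNIV \<times> {p, q})"
  using assms by (auto simp: inj_on_def) metis

lemma sum_Spq:
  assumes "\<And>i. l i p \<noteq> l i q"
  shows "(\<Sum>ob\<in>Spq l p q. f ob) = (\<Sum>i\<in>UNIV. f (i, l i p) + f (i, l i q))"
proof -
  have pq: "p \<noteq> q" using assms by metis
  have "(\<Sum>ob\<in>Spq l p q. f ob) = (\<Sum>x\<in>UNIV \<times> {p, q}. f ((\<lambda>(i, t). (i, l i t)) x))"
    unfolding Spq_def using sum.reindex[OF Spq_inj[where l=l and p=p and q=q, OF assms], of f]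
    by (simp add: comp_def)
  also have "\<dots> = (\<Sum>i\<in>UNIV. \<Sum>t\<in>{p, q}. f (i, l i t))"
    by (simp add: sum.cartesian_product split_def)
  also have "\<dots> = (\<Sum>i\<in>UNIV. f (i, l i p) + f (i, l i q))"
    using pq by simp
  finally show ?thesis .
qed

lemma scaleR_mv: "(c *\<^sub>R A) *v x = c *\<^sub>R (A *v (x::real^'a))"
  by (simp add: vec_eq_iff matrix_vector_mult_def sum_distrib_left mult_ac)

lemma uminus_mv: "(- A) *v x = - (A *v (x::real^'a))"
  by (simp add: vec_eq_iff matrix_vector_mult_def sum_negf)

lemma zv_sum:
  assumes "\<And>i. l i p \<noteq> l i q"
  shows "Zv n X l p q w = (\<Sum>ob\<in>Spq l p q. Mo n l p ob *v (X (fst ob) (snd ob) w - mu (fst ob)))"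
proof -
  have "(\<Sum>ob\<in>Spq l p q. Mo n l p ob *v (X (fst ob) (snd ob) w - mu (fst ob))) $ k = Zv n X l p q w $ k" for k
  proof -
    have lq: "l i q \<noteq> l i p" for i using assms[of i] by metis
    have "(\<Sum>ob\<in>Spq l p q. Mo n l p ob *v (X (fst ob) (snd ob) w - mu (fst ob))) $ k
       = (\<Sum>i\<in>UNIV. (Mo n l p (i, l i p) *v (X i (l i p) w - mu i)) $ k + (Mo n l p (i, l i q) *v (X i (l i q) w - mu i)) $ k)"
      by (simp add: sum_component sum_Spq[where l=l and p=p and q=q, OF assms])
    also have "\<dots> = (\<Sum>i\<in>UNIV. if fst k = i then sc n i * ((X i (l i p) w - mu i) $ snd k) - sc n i * ((X i (l i q) w - mu i) $ snd k) else 0)"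
      by (intro sum.cong refl) (simp add: Mo_def lq emb_mv scaleR_mv uminus_mv)
    also have "\<dots> = sc n (fst k) * ((X (fst k) (l (fst k) p) w - mu (fst k)) $ snd k) - sc n (fst k) * ((X (fst k) (l (fst k) q) w - mu (fst k)) $ snd k)"
      by (simp add: if_distrib cong: if_cong)
    also have "\<dots> = Zv n X l p q w $ k"
      by (simp add: Zv_def Zblk_def sc_def algebra_simps)
    finally show ?thesis .
  qed
  then show ?thesis by (simp add: vec_eq_iff)
qed

lemma scaleR_sandwich:
  fixes A :: "real^'a^'b" and S :: "real^'a^'a"
  shows "(c *\<^sub>R A) ** S ** transpose (c *\<^sub>R A) = (c * c) *\<^sub>R (A ** S ** transpose A)"
  by (simp add: vec_eq_iff matrix_matrix_mult_def transpose_def sum_distrib_left mult_ac)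

lemma zv_cov:
  fixes Sigma :: "'g::finite \<Rightarrow> real^'d::finite^'d"
  assumes "\<And>i. l i p \<noteq> l i q" and "\<And>i. n i > 0"
  shows "(\<Sum>ob\<in>Spq l p q. Mo n l p ob ** Sigma (fst ob) ** transpose (Mo n l p ob)) = VN n Sigma + VN n Sigma"
proof -
  have sc2: "sc n i * sc n i = real (\<Sum>k\<in>UNIV. n k) / real (n i)" for i
    unfolding sc_def by (simp add: real_sqrt_mult_self abs_of_nonneg sum_nonneg)
  have e: "Mo n l p ob ** Sigma (fst ob) ** transpose (Mo n l p ob)
      = (real (\<Sum>k\<in>UNIV. n k) / real (n (fst ob))) *\<^sub>R (emb (fst ob) ** Sigma (fst ob) ** transpose (emb (fst ob)))" for ob
    unfolding Mo_def scaleR_sandwich using sc2[of "fst ob"] by (auto simp: sc2)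
  show ?thesis
  proof (simp only: vec_eq_iff, intro allI)
    fix k k'
    have "(\<Sum>ob\<in>Spq l p q. Mo n l p ob ** Sigma (fst ob) ** transpose (Mo n l p ob)) $ k $ k'
       = (\<Sum>i\<in>UNIV. 2 * (real (\<Sum>k\<in>UNIV. n k) / real (n i)) *
           (if fst k = i \<and> fst k' = i then Sigma i $ snd k $ snd k' else 0))"
      by (simp add: sum_Spq[where l=l and p=p and q=q, OF assms(1)] e sum_component emb_S_emb mult_ac)
    also have "\<dots> = (VN n Sigma + VN n Sigma) $ k $ k'"
    proof (cases "fst k = fst k'")
      case True then show ?thesis by (auto simp: VN_def if_distrib cong: if_cong)
    next
      case False
      then have "(\<Sum>i\<in>UNIV. 2 * (real (\<Sum>k\<in>UNIV. n k) / real (n i)) *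
           (if fst k = i \<and> fst k' = i then Sigma i $ snd k $ snd k' else 0)) = 0"
        by (intro sum.neutral) auto
      then show ?thesis using False by (simp add: VN_def)
    qed
    finally show "(\<Sum>ob\<in>Spq l p q. Mo n l p ob ** Sigma (fst ob) ** transpose (Mo n l p ob)) $ k $ k' = (VN n Sigma + VN n Sigma) $ k $ k'" .
  qed
qed

lemma Spq_sub:
  assumes "\<And>i. l i p < n i" "\<And>i. l i q < n i"
  shows "Spq l p q \<subseteq> {(i, j). j < n i}"
  using assms unfolding Spq_def by auto

lemma zv_gm:
  fixes X :: "'g::finite \<Rightarrow> nat \<Rightarrow> 'w \<Rightarrow> real^'d::finite" and Sigma :: "'g \<Rightarrow> real^'d^'d"
  assumes P: "prob_space M"
    and D: "\<And>i j. j < n i \<Longrightarrow> distributed M lborel (X i j) (\<lambda>x. ennreal (mvn_density (mu i) (Sigma i) x))"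
    and S: "\<And>i. sym_pos_def_mat (Sigma i)"
    and ind: "prob_space.indep_vars M (\<lambda>_. borel) (\<lambda>(i, j). X i j) {(i, j). j < n i}"
    and l: "\<And>i. l i p \<noteq> l i q" "\<And>i. l i p < n i" "\<And>i. l i q < n i"
  shows "gm M (Zv n X l p q) (VN n Sigma + VN n Sigma)"
proof -
  interpret prob_space M by fact
  have npos: "n i > 0" for i using l(2)[of i] by simp
  let ?Y = "\<lambda>ob w. Mo n l p ob *v (X (fst ob) (snd ob) w - mu (fst ob))"
  have ind1: "indep_vars (\<lambda>_. borel) (\<lambda>(i, j). X i j) (Spq l p q)"
    by (rule indep_vars_subset[OF ind Spq_sub[where l=l and p=p and q=q and n=n, OF l(2,3)]])
  have ind2: "indep_vars (\<lambda>_. borel) (\<lambda>ob w. (\<lambda>x. Mo n l p ob *v (x - mu (fst ob))) ((\<lambda>(i, j). X i j) ob w)) (Spq l p q)"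
    by (rule indep_vars_compose2[OF ind1]) measurable
  have ind3: "indep_vars (\<lambda>_. borel) ?Y (Spq l p q)"
    using ind2 by (simp add: case_prod_beta)
  have g: "gm M (?Y ob) (Mo n l p ob ** Sigma (fst ob) ** transpose (Mo n l p ob))" if "ob \<in> Spq l p q" for ob
  proof -
    have "snd ob < n (fst ob)" using that Spq_sub[where l=l and p=p and q=q and n=n, OF l(2,3)] by auto
    then have "gm M (\<lambda>w. X (fst ob) (snd ob) w - mu (fst ob)) (Sigma (fst ob))"
      by (intro gm_base[OF P S D])
    then show ?thesis by (rule gm_linear)
  qed
  have "gm M (\<lambda>w. \<Sum>ob\<in>Spq l p q. ?Y ob w) (\<Sum>ob\<in>Spq l p q. Mo n l p ob ** Sigma (fst ob) ** transpose (Mo n l p ob))"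
    by (rule gm_sum[OF _ ind3 g]) (simp add: Spq_def)
  moreover have "(\<lambda>w. \<Sum>ob\<in>Spq l p q. ?Y ob w) = Zv n X l p q"
    by (intro ext) (rule zv_sum[where l=l and p=p and q=q and mu=mu and n=n and X=X, OF l(1), symmetric])
  moreover have "(\<Sum>ob\<in>Spq l p q. Mo n l p ob ** Sigma (fst ob) ** transpose (Mo n l p ob)) = VN n Sigma + VN n Sigma"
    by (rule zv_cov[where l=l and p=p and q=q and n=n and Sigma=Sigma, OF l(1) npos])
  ultimately show ?thesis by simp
qed

definition Fsum :: "('g::finite \<Rightarrow> nat) \<Rightarrow> ('g \<Rightarrow> real^'d::finite) \<Rightarrow> ('g \<Rightarrow> nat \<Rightarrow> nat) \<Rightarrow> nat \<Rightarrow> nat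
   \<Rightarrow> ('g \<times> nat \<Rightarrow> real^'d) \<Rightarrow> real^('g \<times> 'd)" where
  "Fsum n mu l p q f = (\<Sum>ob\<in>Spq l p q. Mo n l p ob *v (f ob - mu (fst ob)))"

lemma Fsum_meas:
  assumes "Spq l p q \<subseteq> S"
  shows "Fsum n mu l p q \<in> borel_measurable (PiM S (\<lambda>_. borel))"
  unfolding Fsum_def
proof (intro borel_measurable_sum)
  fix ob assume "ob \<in> Spq l p q"
  then have "ob \<in> S" using assms by auto
  then have [measurable]: "(\<lambda>f. f ob) \<in> measurable (PiM S (\<lambda>_. borel)) (borel :: (real^'d) measure)"
    by (intro measurable_component_singleton)
  show "(\<lambda>f. Mo n l p ob *v (f ob - mu (fst ob))) \<in> borel_measurable (PiM S (\<lambda>_. borel))"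
    by measurable
qed

lemma Zv_Fsum:
  assumes "\<And>i. l i p \<noteq> l i q" and "Spq l p q \<subseteq> S"
  shows "Zv n X l p q w = Fsum n mu l p q (restrict (\<lambda>ob. (\<lambda>(i, j). X i j) ob w) S)"
  unfolding zv_sum[where l=l and p=p and q=q and mu=mu and n=n and X=X, OF assms(1)] Fsum_def
  using assms(2) by (intro sum.cong refl) (auto simp: case_prod_beta)

lemma Spq_disj:
  assumes "\<And>i. inj_on (l i) {..<6}" "p < 6" "q < 6" "r < 6" "s < 6" "p \<noteq> r" "p \<noteq> s" "q \<noteq> r" "q \<noteq> s"
  shows "Spq l p q \<inter> Spq l r s = {}"
proof -
  have "l i a \<noteq> l i b" if "a < 6" "b < 6" "a \<noteq> b" for i a b
    using assms(1)[of i] that by (auto simp: inj_on_def)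
  then show ?thesis using assms(2-) unfolding Spq_def by auto
qed

lemma transpose_plus: "transpose (A + B) = transpose A + transpose (B::real^'a^'b)"
  by (simp add: vec_eq_iff transpose_def)

lemma kron_sym:
  assumes "transpose A = A" "transpose B = B"
  shows "transpose (kron A B) = kron A B"
proof -
  have "A $ i $ j = A $ j $ i" for i j using assms(1) by (metis transpose_def vec_lambda_beta)
  moreover have "B $ i $ j = B $ j $ i" for i j using assms(2) by (metis transpose_def vec_lambda_beta)
  ultimately show ?thesis by (simp add: vec_eq_iff kron_def transpose_def)
qed

lemma VN_sym:
  fixes Sigma :: "'g::finite \<Rightarrow> real^'d::finite^'d"
  assumes "\<And>i. transpose (Sigma i) = Sigma i"
  shows "transpose (VN n Sigma) = VN n Sigma"
proof -
  have "Sigma g $ i $ j = Sigma g $ j $ i" for g i j using assms[of g] by (metis transpose_def vec_lambda_beta)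
  then show ?thesis by (auto simp: vec_eq_iff VN_def transpose_def)
qed

lemma (in prob_space) joint_indep_pair:
  assumes ind: "indep_var N1 Y1 N2 Y2" and f: "f \<in> measurable N1 S" and g: "g \<in> measurable N2 T"
  shows "distr M (S \<Otimes>\<^sub>M T) (\<lambda>w. (f (Y1 w), g (Y2 w))) = distr M S (\<lambda>w. f (Y1 w)) \<Otimes>\<^sub>M distr M T (\<lambda>w. g (Y2 w))"
proof -
  have rv1: "random_variable N1 Y1" and rv2: "random_variable N2 Y2"
    and d: "distr M N1 Y1 \<Otimes>\<^sub>M distr M N2 Y2 = distr M (N1 \<Otimes>\<^sub>M N2) (\<lambda>x. (Y1 x, Y2 x))"
    using ind unfolding indep_var_distribution_eq by blast+
  have e1: "distr M S (\<lambda>w. f (Y1 w)) = distr (distr M N1 Y1) S f"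
    using distr_distr[OF f rv1] by (simp add: comp_def)
  have e2: "distr M T (\<lambda>w. g (Y2 w)) = distr (distr M N2 Y2) T g"
    using distr_distr[OF g rv2] by (simp add: comp_def)
  have sf: "sigma_finite_measure (distr (distr M N2 Y2) T g)"
  proof -
    have "prob_space (distr (distr M N2 Y2) T g)"
      by (intro prob_space.prob_space_distr prob_space_distr rv2) (simp add: g)
    then show ?thesis by (simp add: prob_space_imp_sigma_finite)
  qed
  have "distr M S (\<lambda>w. f (Y1 w)) \<Otimes>\<^sub>M distr M T (\<lambda>w. g (Y2 w))
      = distr (distr M N1 Y1 \<Otimes>\<^sub>M distr M N2 Y2) (S \<Otimes>\<^sub>M T) (\<lambda>(x, y). (f x, g y))"
    unfolding e1 e2 by (rule pair_measure_distr) (auto simp: f g sf)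
  also have "\<dots> = distr (distr M (N1 \<Otimes>\<^sub>M N2) (\<lambda>x. (Y1 x, Y2 x))) (S \<Otimes>\<^sub>M T) (\<lambda>(x, y). (f x, g y))"
    unfolding d ..
  also have "\<dots> = distr M (S \<Otimes>\<^sub>M T) (\<lambda>w. (f (Y1 w), g (Y2 w)))"
  proof -
    have m: "(\<lambda>z. (f (fst z), g (snd z))) \<in> measurable (N1 \<Otimes>\<^sub>M N2) (S \<Otimes>\<^sub>M T)"
      by (intro measurable_Pair measurable_compose[OF measurable_fst f] measurable_compose[OF measurable_snd g])
    have m': "(\<lambda>(x, y). (f x, g y)) \<in> measurable (N1 \<Otimes>\<^sub>M N2) (S \<Otimes>\<^sub>M T)"
      using m by (simp add: case_prod_beta')
    have rv: "(\<lambda>x. (Y1 x, Y2 x)) \<in> measurable M (N1 \<Otimes>\<^sub>M N2)" by (intro measurable_Pair rv1 rv2)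
    show ?thesis by (subst distr_distr[OF m' rv]) (simp add: comp_def)
  qed
  finally show ?thesis ..
qed

lemma tuple_stats:
  fixes X :: "'g::finite \<Rightarrow> nat \<Rightarrow> 'w \<Rightarrow> real^'d::finite" and Sigma :: "'g \<Rightarrow> real^'d^'d"
  assumes P: "prob_space M"
    and D: "\<And>i j. j < n i \<Longrightarrow> distributed M lborel (X i j) (\<lambda>x. ennreal (mvn_density (mu i) (Sigma i) x))"
    and S: "\<And>i. sym_pos_def_mat (Sigma i)"
    and ind: "prob_space.indep_vars M (\<lambda>_. borel) (\<lambda>(i, j). X i j) {(i, j). j < n i}"
    and TW: "transpose TW = TW" and TS: "transpose TS = TS"
    and linj: "\<And>i. inj_on (l i) {..<6}" and lr: "\<And>i k. k < 6 \<Longrightarrow> l i k < n i"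
  defines "T \<equiv> kron TW TS" and "K \<equiv> VN n Sigma + VN n Sigma"
    and "h \<equiv> \<lambda>w. Lam n X TW TS l 0 1 2 3 w * Lam n X TW TS l 2 3 4 5 w * Lam n X TW TS l 4 5 0 1 w"
  shows "integrable M h" "(\<integral>w. h w \<partial>M) = trace (T ** K ** T ** K ** T ** K)"
    "integrable M (\<lambda>w. (h w)^2)" "(\<integral>w. (h w)^2 \<partial>M) \<le> 27 * (trace (T ** K ** T ** K))^3"
proof -
  interpret prob_space M by fact
  have Ts: "transpose T = T" unfolding T_def by (rule kron_sym[OF TW TS])
  have v: "transpose (VN n Sigma) = VN n Sigma"
    by (rule VN_sym) (use S in \<open>simp add: sym_pos_def_mat_def\<close>)
  have Ks: "transpose K = K" unfolding K_def transpose_plus v ..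
  have ne: "l i a \<noteq> l i b" if "a < 6" "b < 6" "a \<noteq> b" for i a b
    using linj[of i] that by (auto simp: inj_on_def)
  define Obs where "Obs = {(i, j). j < n i}"
  define A where "A = Zv n X l 0 1"
  define B where "B = Zv n X l 2 3"
  define C where "C = Zv n X l 4 5"
  have gA: "gm M A K" unfolding A_def K_def
    by (rule zv_gm[OF P D S ind]) (auto simp: ne intro: lr)
  have gB: "gm M B K" unfolding B_def K_def
    by (rule zv_gm[OF P D S ind]) (auto simp: ne intro: lr)
  have gC: "gm M C K" unfolding C_def K_def
    by (rule zv_gm[OF P D S ind]) (auto simp: ne intro: lr)
  have Am[measurable]: "A \<in> borel_measurable M" using gm_facts(1)[OF gA] .
  have Bm[measurable]: "B \<in> borel_measurable M" using gm_facts(1)[OF gB] .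
  have Cm[measurable]: "C \<in> borel_measurable M" using gm_facts(1)[OF gC] .
  have sub: "Spq l p q \<subseteq> Obs" if "p < 6" "q < 6" for p q
    unfolding Obs_def using that lr by (intro Spq_sub) auto
  have indO: "indep_vars (\<lambda>_. borel) (\<lambda>(i, j). X i j) Obs" using ind unfolding Obs_def .
  let ?R = "\<lambda>S w. restrict (\<lambda>ob. (\<lambda>(i, j). X i j) ob w) S"
  have d1: "Spq l 0 1 \<inter> (Spq l 2 3 \<union> Spq l 4 5) = {}"
    using Spq_disj[where l=l, OF linj, of 0 1 2 3] Spq_disj[where l=l, OF linj, of 0 1 4 5] by auto
  have r1: "indep_var (PiM (Spq l 0 1) (\<lambda>_. borel)) (?R (Spq l 0 1))
      (PiM (Spq l 2 3 \<union> Spq l 4 5) (\<lambda>_. borel)) (?R (Spq l 2 3 \<union> Spq l 4 5))"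
    by (rule indep_var_restrict[OF indO d1]) (use sub in auto)
  have mBC: "(\<lambda>f. (Fsum n mu l 2 3 f, Fsum n mu l 4 5 f)) \<in> measurable (PiM (Spq l 2 3 \<union> Spq l 4 5) (\<lambda>_. borel)) (borel \<Otimes>\<^sub>M borel)"
    by (intro measurable_Pair Fsum_meas) auto
  have jA: "distr M (borel \<Otimes>\<^sub>M (borel \<Otimes>\<^sub>M borel)) (\<lambda>w. (A w, (B w, C w)))
      = distr M borel A \<Otimes>\<^sub>M distr M (borel \<Otimes>\<^sub>M borel) (\<lambda>w. (B w, C w))"
  proof -
    have p1: "Fsum n mu l 0 1 (?R (Spq l 0 1) w) = A w" for w
      unfolding A_def by (rule Zv_Fsum[symmetric]) (auto simp: ne)
    have p2: "Fsum n mu l 2 3 (?R (Spq l 2 3 \<union> Spq l 4 5) w) = B w" for w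
      unfolding B_def by (rule Zv_Fsum[symmetric]) (auto simp: ne)
    have p3: "Fsum n mu l 4 5 (?R (Spq l 2 3 \<union> Spq l 4 5) w) = C w" for w
      unfolding C_def by (rule Zv_Fsum[symmetric]) (auto simp: ne)
    show ?thesis using joint_indep_pair[OF r1 Fsum_meas[where n=n and mu=mu, OF order.refl] mBC]
      by (simp only: p1 p2 p3)
  qed
  have d2: "Spq l 2 3 \<inter> Spq l 4 5 = {}"
    using Spq_disj[where l=l, OF linj, of 2 3 4 5] by auto
  have r2: "indep_var (PiM (Spq l 2 3) (\<lambda>_. borel)) (?R (Spq l 2 3))
      (PiM (Spq l 4 5) (\<lambda>_. borel)) (?R (Spq l 4 5))"
    by (rule indep_var_restrict[OF indO d2]) (use sub in auto)
  have jBC: "distr M (borel \<Otimes>\<^sub>M borel) (\<lambda>w. (B w, C w)) = distr M borel B \<Otimes>\<^sub>M distr M borel C"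
  proof -
    have p2: "Fsum n mu l 2 3 (?R (Spq l 2 3) w) = B w" for w
      unfolding B_def by (rule Zv_Fsum[symmetric]) (auto simp: ne)
    have p3: "Fsum n mu l 4 5 (?R (Spq l 4 5) w) = C w" for w
      unfolding C_def by (rule Zv_Fsum[symmetric]) (auto simp: ne)
    show ?thesis
      using joint_indep_pair[OF r2 Fsum_meas[where n=n and mu=mu, OF order.refl] Fsum_meas[where n=n and mu=mu, OF order.refl]]
      by (simp only: p2 p3)
  qed
  have joint: "distr M (borel \<Otimes>\<^sub>M (borel \<Otimes>\<^sub>M borel)) (\<lambda>w. (A w, (B w, C w)))
      = distr M borel A \<Otimes>\<^sub>M (distr M borel B \<Otimes>\<^sub>M distr M borel C)"
    using jA jBC by simp
  define H where "H = (\<lambda>z. (fst z \<bullet> (T *v fst (snd z))) * (fst (snd z) \<bullet> (T *v snd (snd z)))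
             * (snd (snd z) \<bullet> (T *v fst z)))"
  have Hm[measurable]: "H \<in> borel_measurable (borel \<Otimes>\<^sub>M (borel \<Otimes>\<^sub>M borel))"
    unfolding H_def by measurable
  have hH: "h w = H (A w, (B w, C w))" for w
    unfolding h_def H_def A_def B_def C_def T_def by (simp add: lam_inner)
  have gmA: "gmm (distr M borel A) K" by (rule gmm_distr[OF gA Ks])
  have gmB: "gmm (distr M borel B) K" by (rule gmm_distr[OF gB Ks])
  have gmC: "gmm (distr M borel C) K" by (rule gmm_distr[OF gC Ks])
  note FM = fubini_mean[OF gmA gmB gmC Ts]
  have "integrable (distr M (borel \<Otimes>\<^sub>M (borel \<Otimes>\<^sub>M borel)) (\<lambda>w. (A w, (B w, C w)))) H"
    unfolding joint H_def by (rule FM(1))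
  then show hi: "integrable M h" unfolding hH by (subst (asm) integrable_distr_eq) auto
  have "(\<integral>w. h w \<partial>M) = (\<integral>z. H z \<partial>distr M (borel \<Otimes>\<^sub>M (borel \<Otimes>\<^sub>M borel)) (\<lambda>w. (A w, (B w, C w))))"
    unfolding hH by (subst integral_distr) auto
  also have "\<dots> = trace (T ** K ** T ** K ** T ** K)"
    unfolding joint H_def by (rule FM(2))
  finally show "(\<integral>w. h w \<partial>M) = trace (T ** K ** T ** K ** T ** K)" .
  have J0: "0 \<le> trace (T ** K ** T ** K)" by (rule trace_nonneg_gmm[OF gmA Ts])
  have "(\<integral>\<^sup>+w. ennreal ((h w)^2) \<partial>M)
      = (\<integral>\<^sup>+z. ennreal ((H z)^2) \<partial>distr M (borel \<Otimes>\<^sub>M (borel \<Otimes>\<^sub>M borel)) (\<lambda>w. (A w, (B w, C w))))"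
    unfolding hH by (subst nn_integral_distr) auto
  also have "\<dots> \<le> ennreal (27 * (trace (T ** K ** T ** K))^3)"
    unfolding joint H_def by (rule tonelli_bound[OF gmA gmB gmC Ts])
  finally have nn: "(\<integral>\<^sup>+w. ennreal ((h w)^2) \<partial>M) \<le> ennreal (27 * (trace (T ** K ** T ** K))^3)" .
  have hm[measurable]: "h \<in> borel_measurable M" using hi by auto
  show hi2: "integrable M (\<lambda>w. (h w)^2)"
    by (rule integrableI_nonneg) (use nn in \<open>auto simp: top.extremum_unique less_top[symmetric] intro: le_less_trans\<close>)
  have "ennreal (\<integral>w. (h w)^2 \<partial>M) = (\<integral>\<^sup>+w. ennreal ((h w)^2) \<partial>M)"
    by (rule nn_integral_eq_integral[OF hi2, symmetric]) simp
  with nn have "ennreal (\<integral>w. (h w)^2 \<partial>M) \<le> ennreal (27 * (trace (T ** K ** T ** K))^3)" by simp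
  then show "(\<integral>w. (h w)^2 \<partial>M) \<le> 27 * (trace (T ** K ** T ** K))^3"
    using J0 by (subst (asm) ennreal_le_iff) auto
qed

definition IF6 :: "nat set \<Rightarrow> (nat \<Rightarrow> nat) set" where
  "IF6 S = {f \<in> {..<6::nat} \<rightarrow>\<^sub>E S. inj_on f {..<6}}"

lemma IF6_lists:
  "bij_betw (\<lambda>f. map f [0..<6]) (IF6 S) {xs. length xs = 6 \<and> distinct xs \<and> set xs \<subseteq> S}"
proof (rule bij_betw_byWitness[where f'="\<lambda>xs i. if i < 6 then xs ! i else undefined"])
  show "\<forall>f\<in>IF6 S. (\<lambda>i. if i < 6 then map f [0..<6] ! i else undefined) = f"
    by (auto simp: IF6_def fun_eq_iff PiE_def extensional_def)
  show "\<forall>xs\<in>{xs. length xs = 6 \<and> distinct xs \<and> set xs \<subseteq> S}. map (\<lambda>i. if i < 6 then xs ! i else undefined) [0..<6] = xs"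
  proof
    fix xs :: "nat list" assume "xs \<in> {xs. length xs = 6 \<and> distinct xs \<and> set xs \<subseteq> S}"
    then have l: "length xs = 6" by simp
    have "map (\<lambda>i. if i < 6 then xs ! i else undefined) [0..<6] = map (\<lambda>i. xs ! i) [0..<length xs]"
      using l by (intro map_cong) auto
    also have "\<dots> = xs" by (rule map_nth)
    finally show "map (\<lambda>i. if i < 6 then xs ! i else undefined) [0..<6] = xs" .
  qed
  show "(\<lambda>f. map f [0..<6]) ` IF6 S \<subseteq> {xs. length xs = 6 \<and> distinct xs \<and> set xs \<subseteq> S}"
    by (auto simp: IF6_def distinct_map lessThan_atLeast0)
  show "(\<lambda>xs i. if i < 6 then xs ! i else undefined) ` {xs. length xs = 6 \<and> distinct xs \<and> set xs \<subseteq> S} \<subseteq> IF6 S"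
  proof safe
    fix xs :: "nat list" assume a: "length xs = 6" "distinct xs" "set xs \<subseteq> S"
    show "(\<lambda>i. if i < 6 then xs ! i else undefined) \<in> IF6 S"
      unfolding IF6_def PiE_iff extensional_def using a by (auto simp: inj_on_def nth_eq_iff_index_eq)
  qed
qed

lemma card_IF6:
  assumes "finite S"
  shows "card (IF6 S) = \<Prod>{card S - 5..card S}"
proof (cases "6 \<le> card S")
  case True
  have "card (IF6 S) = card {xs. length xs = 6 \<and> distinct xs \<and> set xs \<subseteq> S}"
    by (rule bij_betw_same_card[OF IF6_lists])
  also have "\<dots> = \<Prod>{card S - 6 + 1..card S}"
    by (rule card_lists_distinct_length_eq[OF assms True])
  finally show ?thesis using True by (simp add: Suc_diff_Suc numeral_eq_Suc)
next
  case False
  have "IF6 S = {}"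
  proof (rule ccontr)
    assume "IF6 S \<noteq> {}"
    then obtain f where f: "f \<in> {..<6::nat} \<rightarrow>\<^sub>E S" "inj_on f {..<6}" unfolding IF6_def by auto
    have "f \<in> {..<6} \<rightarrow> S" using f(1) by (auto simp: PiE_iff)
    then have "card {..<6::nat} \<le> card S" by (rule card_inj[OF _ f(2) assms])
    then show False using False by simp
  qed
  moreover have "\<Prod>{card S - 5..card S} = 0"
    using False by (intro prod_zero) (auto intro!: bexI[of _ 0])
  ultimately show ?thesis by simp
qed

lemma finite_IF6: "finite S \<Longrightarrow> finite (IF6 S)"
  unfolding IF6_def by (rule finite_subset[OF _ finite_PiE[of "{..<6}" "\<lambda>_. S"]]) auto

lemma pf_fact:
  assumes "6 \<le> m"
  shows "fact m = fact (m - 6) * \<Prod>{m - 5..m}"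
proof -
  have "fact m = fact (m - 6) * \<Prod>{Suc (m - 6)..m}" by (rule fact_eq_fact_times) simp
  moreover have "Suc (m - 6) = m - 5" using assms by simp
  ultimately show ?thesis by simp
qed

lemma pf_choose: "\<Prod>{m - 5..m} = fact 6 * (m choose 6)"
proof (cases "6 \<le> m")
  case True
  have "fact 6 * fact (m - 6) * (m choose 6) = fact m" by (rule binomial_fact_lemma[OF True])
  also have "\<dots> = fact (m - 6) * \<Prod>{m - 5..m}" by (rule pf_fact[OF True])
  finally show ?thesis by (simp add: mult_ac)
next
  case False
  then have z: "\<Prod>{m - 5..m} = 0" by (intro prod_zero) (auto intro!: bexI[of _ 0])
  show ?thesis by (subst z) (use False in simp)
qed

lemma pf_real:
  assumes "6 \<le> m"
  shows "real (\<Prod>{m - 5..m}) = fact m / fact (m - 6)"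
proof -
  have "(fact m :: real) = real (fact m)" by simp
  also have "\<dots> = real (fact (m - 6)) * real (\<Prod>{m - 5..m})" using pf_fact[OF assms] by simp
  finally show ?thesis by (simp add: field_simps)
qed

lemma six_tuples_eq: "six_tuples n = PiE UNIV (\<lambda>i. IF6 {..<n i})"
  unfolding six_tuples_def IF6_def ..

lemma card_six_tuples: "card (six_tuples n) = (\<Prod>i\<in>UNIV. \<Prod>{n i - 5..n i})"
  unfolding six_tuples_eq by (simp add: card_PiE card_IF6)

definition Dp :: "nat set \<Rightarrow> ((nat \<Rightarrow> nat) \<times> (nat \<Rightarrow> nat)) set" where
  "Dp S = Sigma (IF6 S) (\<lambda>f. IF6 (S - f ` {..<6}))"

lemma card_Dp:
  assumes "finite S"
  shows "card (Dp S) = \<Prod>{card S - 5..card S} * \<Prod>{(card S - 6) - 5..card S - 6}"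
proof -
  have c: "card (IF6 (S - f ` {..<6})) = \<Prod>{(card S - 6) - 5..card S - 6}" if "f \<in> IF6 S" for f
  proof -
    have sub: "f ` {..<6} \<subseteq> S" and inj: "inj_on f {..<6}" using that by (auto simp: IF6_def)
    have "card (S - f ` {..<6}) = card S - 6"
      using card_Diff_subset[OF finite_imageI[OF finite_lessThan] sub] card_image[OF inj] by simp
    then show ?thesis using card_IF6[of "S - f ` {..<6}"] assms by simp
  qed
  have "card (Dp S) = (\<Sum>f\<in>IF6 S. card (IF6 (S - f ` {..<6})))"
    unfolding Dp_def by (rule card_SigmaI) (simp_all add: finite_IF6 assms)
  also have "\<dots> = (\<Sum>f\<in>IF6 S. \<Prod>{(card S - 6) - 5..card S - 6})"
    by (intro sum.cong refl c)
  also have "\<dots> = \<Prod>{card S - 5..card S} * \<Prod>{(card S - 6) - 5..card S - 6}"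
    by (simp add: card_IF6[OF assms])
  finally show ?thesis .
qed

definition Dset :: "('g::finite \<Rightarrow> nat) \<Rightarrow> (('g \<Rightarrow> nat \<Rightarrow> nat) \<times> ('g \<Rightarrow> nat \<Rightarrow> nat)) set" where
  "Dset n = {p \<in> six_tuples n \<times> six_tuples n. \<forall>i. fst p i ` {..<6} \<inter> snd p i ` {..<6} = {}}"

lemma IF6_diff: "g \<in> IF6 (S - A) \<longleftrightarrow> g \<in> IF6 S \<and> g ` {..<6} \<inter> A = {}"
  by (auto simp: IF6_def PiE_iff)

lemma Dp_mem: "(f, g) \<in> Dp S \<longleftrightarrow> f \<in> IF6 S \<and> g \<in> IF6 S \<and> f ` {..<6} \<inter> g ` {..<6} = {}"
  unfolding Dp_def by (auto simp: IF6_diff)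

lemma Dset_mem: "p \<in> Dset n \<longleftrightarrow> (\<forall>i. (fst p i, snd p i) \<in> Dp {..<n i})"
  unfolding Dset_def Dp_mem six_tuples_eq by (cases p) (simp add: PiE_iff all_conj_distrib)

lemma card_Dset: "card (Dset n) = (\<Prod>i\<in>UNIV. \<Prod>{n i - 5..n i} * \<Prod>{(n i - 6) - 5..n i - 6})"
proof -
  have "bij_betw (\<lambda>p i. (fst p i, snd p i)) (Dset n) (PiE UNIV (\<lambda>i. Dp {..<n i}))"
  proof (rule bij_betw_byWitness[where f'="\<lambda>q. (\<lambda>i. fst (q i), \<lambda>i. snd (q i))"])
    show "\<forall>a\<in>Dset n. (\<lambda>i. fst ((\<lambda>p i. (fst p i, snd p i)) a i), \<lambda>i. snd ((\<lambda>p i. (fst p i, snd p i)) a i)) = a"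
      by auto
    show "\<forall>a'\<in>PiE UNIV (\<lambda>i. Dp {..<n i}). (\<lambda>p i. (fst p i, snd p i)) (\<lambda>i. fst (a' i), \<lambda>i. snd (a' i)) = a'"
      by auto
    show "(\<lambda>p i. (fst p i, snd p i)) ` Dset n \<subseteq> PiE UNIV (\<lambda>i. Dp {..<n i})"
      by (auto simp: Dset_mem PiE_iff)
    show "(\<lambda>q. (\<lambda>i. fst (q i), \<lambda>i. snd (q i))) ` PiE UNIV (\<lambda>i. Dp {..<n i}) \<subseteq> Dset n"
      by (auto simp: Dset_mem PiE_iff)
  qed
  then have "card (Dset n) = card (PiE UNIV (\<lambda>i. Dp {..<n i}))" by (rule bij_betw_same_card)
  also have "\<dots> = (\<Prod>i\<in>UNIV. card (Dp {..<n i}))" by (simp add: card_PiE)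
  also have "\<dots> = (\<Prod>i\<in>UNIV. \<Prod>{n i - 5..n i} * \<Prod>{(n i - 6) - 5..n i - 6})"
    by (simp add: card_Dp)
  finally show ?thesis .
qed

lemma abs_mult_le_sq: "\<bar>x * y\<bar> \<le> (x^2 + y^2) / 2" for x y :: real
proof -
  have "0 \<le> (\<bar>x\<bar> - \<bar>y\<bar>)^2" by simp
  then have "2 * (\<bar>x\<bar> * \<bar>y\<bar>) \<le> \<bar>x\<bar>^2 + \<bar>y\<bar>^2" by (simp add: power2_eq_square algebra_simps)
  then show ?thesis by (simp add: abs_mult)
qed

lemma mult_le_sq: "x * y \<le> (x^2 + y^2) / 2" for x y :: real
  using abs_mult_le_sq[of x y] by simp

lemma (in prob_space) ustat_var:
  fixes h :: "'l \<Rightarrow> 'a \<Rightarrow> real"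
  assumes L: "finite L"
    and hi: "\<And>l. l \<in> L \<Longrightarrow> integrable M (h l)"
    and hi2: "\<And>l. l \<in> L \<Longrightarrow> integrable M (\<lambda>w. (h l w)^2)"
    and mean: "\<And>l. l \<in> L \<Longrightarrow> (\<integral>w. h l w \<partial>M) = m"
    and bnd: "\<And>l. l \<in> L \<Longrightarrow> (\<integral>w. (h l w)^2 \<partial>M) \<le> B"
    and DL: "D \<subseteq> L \<times> L"
    and ind: "\<And>l l'. (l, l') \<in> D \<Longrightarrow> indep_var borel (h l) borel (h l')"
  shows "(\<integral>w. ((\<Sum>l\<in>L. h l w) - real (card L) * m)^2 \<partial>M) \<le> real (card (L \<times> L - D)) * B"
proof -
  define g where "g l w = h l w - m" for l w
  have gm[measurable]: "g l \<in> borel_measurable M" if "l \<in> L" for l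
    using hi[OF that] unfolding g_def by auto
  have gi2: "integrable M (\<lambda>w. (g l w)^2)" if "l \<in> L" for l
  proof -
    have "(\<lambda>w. (g l w)^2) = (\<lambda>w. (h l w)^2 - 2 * m * h l w + m^2)"
      unfolding g_def by (simp add: power2_eq_square algebra_simps)
    then show ?thesis using hi[OF that] hi2[OF that] by simp
  qed
  have gv: "(\<integral>w. (g l w)^2 \<partial>M) \<le> B" if "l \<in> L" for l
  proof -
    have "(\<lambda>w. (g l w)^2) = (\<lambda>w. (h l w)^2 - 2 * m * h l w + m^2)"
      unfolding g_def by (simp add: power2_eq_square algebra_simps)
    then have "(\<integral>w. (g l w)^2 \<partial>M) = (\<integral>w. (h l w)^2 \<partial>M) - m^2"
      using hi[OF that] hi2[OF that] mean[OF that] by (simp add: prob_space power2_eq_square)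
    then show ?thesis using bnd[OF that] zero_le_power2[of m] by linarith
  qed
  have gi12: "integrable M (\<lambda>w. g l w * g l' w)" if "l \<in> L" "l' \<in> L" for l l'
  proof (rule Bochner_Integration.integrable_bound[OF Bochner_Integration.integrable_add[OF gi2[OF that(1)] gi2[OF that(2)]]])
    show "AE w in M. norm (g l w * g l' w) \<le> norm ((g l w)^2 + (g l' w)^2)"
    proof (intro AE_I2)
      fix w
      have "\<bar>g l w * g l' w\<bar> \<le> (g l w)^2 + (g l' w)^2"
      proof (rule order.trans[OF abs_mult_le_sq])
        have "0 \<le> (g l w)^2 + (g l' w)^2" by simp
        then show "((g l w)^2 + (g l' w)^2) / 2 \<le> (g l w)^2 + (g l' w)^2" by simp
      qed
      then show "norm (g l w * g l' w) \<le> norm ((g l w)^2 + (g l' w)^2)" by simp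
    qed
  qed (use that in auto)
  have sq: "((\<Sum>l\<in>L. h l w) - real (card L) * m)^2 = (\<Sum>l\<in>L. \<Sum>l'\<in>L. g l w * g l' w)" for w
  proof -
    have "(\<Sum>l\<in>L. h l w) - real (card L) * m = (\<Sum>l\<in>L. g l w)"
      unfolding g_def by (simp add: sum_subtractf)
    then show ?thesis by (simp add: power2_eq_square sum_product)
  qed
  define F where "F p = (\<integral>w. g (fst p) w * g (snd p) w \<partial>M)" for p
  have "(\<integral>w. ((\<Sum>l\<in>L. h l w) - real (card L) * m)^2 \<partial>M) = (\<Sum>l\<in>L. \<Sum>l'\<in>L. F (l, l'))"
    unfolding sq F_def
    by (simp add: Bochner_Integration.integral_sum Bochner_Integration.integrable_sum gi12)
  also have "\<dots> = (\<Sum>p\<in>L \<times> L. F p)" by (simp add: sum.cartesian_product)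
  also have "\<dots> = (\<Sum>p\<in>L \<times> L - D. F p) + (\<Sum>p\<in>D. F p)"
    by (rule sum.subset_diff[OF DL]) (simp add: L)
  also have "(\<Sum>p\<in>D. F p) = 0"
  proof (intro sum.neutral ballI)
    fix p assume p: "p \<in> D"
    obtain l l' where pl: "p = (l, l')" by (cases p)
    have ll: "l \<in> L" "l' \<in> L" using p pl DL by auto
    have i2: "indep_var borel (\<lambda>w. h l w - m) borel (\<lambda>w. h l' w - m)"
      using indep_var_compose[OF ind[OF p[unfolded pl]], of "\<lambda>x. x - m" borel "\<lambda>x. x - m" borel]
      by (simp add: comp_def)
    have "F p = (\<integral>w. g l w \<partial>M) * (\<integral>w. g l' w \<partial>M)"
      unfolding F_def pl g_def fst_conv snd_conv using hi[OF ll(1)] hi[OF ll(2)]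
      by (intro indep_var_lebesgue_integral[OF i2]) auto
    also have "\<dots> = 0" using mean[OF ll(1)] hi[OF ll(1)] by (simp add: g_def prob_space)
    finally show "F p = 0" .
  qed
  also have "(\<Sum>p\<in>L \<times> L - D. F p) + 0 \<le> real (card (L \<times> L - D)) * B"
  proof -
    have "F p \<le> B" if "p \<in> L \<times> L - D" for p
    proof -
      obtain l l' where pl: "p = (l, l')" by (cases p)
      have ll: "l \<in> L" "l' \<in> L" using that pl by auto
      have "F p \<le> (\<integral>w. ((g l w)^2 + (g l' w)^2) / 2 \<partial>M)"
        unfolding F_def pl fst_conv snd_conv
        by (intro integral_mono gi12 ll integrable_divide Bochner_Integration.integrable_add gi2 mult_le_sq)
      also have "\<dots> = ((\<integral>w. (g l w)^2 \<partial>M) + (\<integral>w. (g l' w)^2 \<partial>M)) / 2"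
        using gi2[OF ll(1)] gi2[OF ll(2)] by simp
      also have "\<dots> \<le> B" using gv[OF ll(1)] gv[OF ll(2)] by simp
      finally show ?thesis .
    qed
    then have "(\<Sum>p\<in>L \<times> L - D. F p) \<le> (\<Sum>p\<in>L \<times> L - D. B)" by (intro sum_mono) auto
    then show ?thesis by simp
  qed
  finally show ?thesis .
qed

lemma final_arith:
  fixes c A B t :: real
  assumes "c > 0" "A > 0"
  shows "(1 / (8 * (c * A)))^2 * ((c * A) * (c * A) - (c * A) * (c * B)) * (27 * 64 * t^3) = (A - B) / A * 27 * t^3"
proof -
  have "(1 / (8 * (c * A)))^2 * ((c * A) * (c * A) - (c * A) * (c * B)) = (A - B) / A / 64"
    using assms by (simp add: field_simps power2_eq_square)
  then show ?thesis by simp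
qed

lemma mm_scaleR_right: "(A::real^'n^'m) ** (c *\<^sub>R B) = c *\<^sub>R (A ** (B::real^'k^'n))"
  by (simp add: vec_eq_iff matrix_matrix_mult_def sum_distrib_left mult_ac)

lemma mm_scaleR_left: "(c *\<^sub>R (A::real^'n^'m)) ** B = c *\<^sub>R (A ** (B::real^'k^'n))"
  by (simp add: vec_eq_iff matrix_matrix_mult_def sum_distrib_left mult_ac)

lemma trace_scaleR: "trace (c *\<^sub>R (A::real^'n^'n)) = c * trace A"
  by (simp add: trace_def sum_distrib_left)

lemma trace_K:
  fixes T V :: "real^'n^'n"
  shows "trace (T ** (V + V) ** T ** (V + V) ** T ** (V + V)) = 8 * trace ((T ** V) ** (T ** V) ** (T ** V))"
    and "trace (T ** (V + V) ** T ** (V + V)) = 4 * trace ((T ** V) ** (T ** V))"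
proof -
  have K: "V + V = 2 *\<^sub>R V" by (simp add: scaleR_2)
  show "trace (T ** (V + V) ** T ** (V + V) ** T ** (V + V)) = 8 * trace ((T ** V) ** (T ** V) ** (T ** V))"
    unfolding K by (simp add: mm_scaleR_right mm_scaleR_left trace_scaleR matrix_mul_assoc)
  show "trace (T ** (V + V) ** T ** (V + V)) = 4 * trace ((T ** V) ** (T ** V))"
    unfolding K by (simp add: mm_scaleR_right mm_scaleR_left trace_scaleR matrix_mul_assoc)
qed

definition Obsl :: "('g \<Rightarrow> nat \<Rightarrow> nat) \<Rightarrow> ('g \<times> nat) set" where
  "Obsl l = {(i, j). j \<in> l i ` {..<6}}"

definition HH :: "('g::finite \<Rightarrow> nat) \<Rightarrow> real^'g^'g \<Rightarrow> real^'d::finite^'d \<Rightarrow> ('g \<Rightarrow> nat \<Rightarrow> nat)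
    \<Rightarrow> ('g \<times> nat \<Rightarrow> real^'d) \<Rightarrow> real" where
  "HH n TW TS l F = Lam n (\<lambda>i j F. F (i, j)) TW TS l 0 1 2 3 F * Lam n (\<lambda>i j F. F (i, j)) TW TS l 2 3 4 5 F
      * Lam n (\<lambda>i j F. F (i, j)) TW TS l 4 5 0 1 F"

lemma HH_meas: "HH n TW TS l \<in> borel_measurable (PiM (Obsl l) (\<lambda>_. borel :: (real^'d::finite) measure))"
proof -
  have [measurable]: "(\<lambda>F. F (i, l i k)) \<in> measurable (PiM (Obsl l) (\<lambda>_. borel)) (borel :: (real^'d) measure)"
    if "k < 6" for i k
    by (rule measurable_component_singleton) (use that in \<open>auto simp: Obsl_def\<close>)
  show ?thesis unfolding HH_def Lam_def Zblk_def by measurable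
qed

lemma hl_HH:
  "Lam n X TW TS l 0 1 2 3 w * Lam n X TW TS l 2 3 4 5 w * Lam n X TW TS l 4 5 0 1 w
   = HH n TW TS l (restrict (\<lambda>ob. (\<lambda>(i, j). X i j) ob w) (Obsl l))"
proof -
  have mem: "(i, l i k) \<in> Obsl l" if "k < 6" for i k using that by (auto simp: Obsl_def)
  show ?thesis unfolding HH_def Lam_def Zblk_def by (simp add: mem)
qed

theorem lemmaA13:
  fixes M :: "'w measure"
    and n :: "'g::finite \<Rightarrow> nat"
    and X :: "'g \<Rightarrow> nat \<Rightarrow> 'w \<Rightarrow> real^'d::finite"
    and mu :: "'g \<Rightarrow> real^'d"
    and Sigma :: "'g \<Rightarrow> real^'d^'d"
    and TW :: "real^'g^'g" and TS :: "real^'d^'d"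
  assumes "prob_space M"
    and "\<And>i. n i \<ge> 6"
    and "\<And>i. sym_pos_def_mat (Sigma i)"
    and "sym_idem_mat TW" and "sym_idem_mat TS"
    and "\<And>i j. j < n i \<Longrightarrow>
           distributed M lborel (X i j) (\<lambda>x. ennreal (mvn_density (mu i) (Sigma i) x))"
    and "prob_space.indep_vars M (\<lambda>_. borel) (\<lambda>(i, j). X i j) {(i, j). j < n i}"
  shows "integral\<^sup>L M (C5 n X TW TS) =
           trace ((kron TW TS ** VN n Sigma) ** (kron TW TS ** VN n Sigma) ** (kron TW TS ** VN n Sigma)) \<and>
         integral\<^sup>L M (\<lambda>w. (C5 n X TW TS w - integral\<^sup>L M (C5 n X TW TS))\<^sup>2)
         \<le> ((\<Prod>i\<in>UNIV. real (n i choose 6)) - (\<Prod>i\<in>UNIV. real ((n i - 6) choose 6)))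
              / (\<Prod>i\<in>UNIV. real (n i choose 6))
           * 27 * (trace ((kron TW TS ** VN n Sigma) ** (kron TW TS ** VN n Sigma))) ^ 3"
proof -
  note P = assms(1) and n6 = assms(2) and S = assms(3) and TWi = assms(4) and TSi = assms(5)
    and D = assms(6) and ind = assms(7)
  interpret prob_space M by fact
  have TW: "transpose TW = TW" using TWi by (simp add: sym_idem_mat_def)
  have TS: "transpose TS = TS" using TSi by (simp add: sym_idem_mat_def)
  define L where "L = six_tuples n"
  define T where "T = kron TW TS"
  define V where "V = VN n Sigma"
  define hl where "hl l w = Lam n X TW TS l 0 1 2 3 w * Lam n X TW TS l 2 3 4 5 w * Lam n X TW TS l 4 5 0 1 w" for l w
  define Pc where "Pc = (\<Prod>i\<in>UNIV. fact (n i) / fact (n i - 6) :: real)"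
  define m where "m = trace (T ** (V + V) ** T ** (V + V) ** T ** (V + V))"
  define B where "B = 27 * (trace (T ** (V + V) ** T ** (V + V)))^3"
  have finL: "finite L" unfolding L_def six_tuples_eq by (simp add: finite_PiE finite_IF6)
  have lprops: "inj_on (l i) {..<6}" "k < 6 \<Longrightarrow> l i k < n i" if "l \<in> L" for l i k
    using that unfolding L_def six_tuples_def by (auto simp: PiE_iff)
  note ts = tuple_stats[OF P D S ind TW TS]
  have hi: "integrable M (hl l)" if "l \<in> L" for l
    unfolding hl_def[abs_def] by (rule ts(1)) (use lprops[OF that] in auto)
  have hmean: "(\<integral>w. hl l w \<partial>M) = m" if "l \<in> L" for l
    unfolding hl_def m_def T_def V_def by (rule ts(2)) (use lprops[OF that] in auto)
  have hi2: "integrable M (\<lambda>w. (hl l w)^2)" if "l \<in> L" for l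
    unfolding hl_def by (rule ts(3)) (use lprops[OF that] in auto)
  have hb: "(\<integral>w. (hl l w)^2 \<partial>M) \<le> B" if "l \<in> L" for l
    unfolding hl_def B_def T_def V_def by (rule ts(4)) (use lprops[OF that] in auto)
  have cardL: "real (card L) = Pc"
  proof -
    have "real (card L) = (\<Prod>i\<in>UNIV. real (\<Prod>{n i - 5..n i}))"
      unfolding L_def card_six_tuples by simp
    also have "\<dots> = Pc" unfolding Pc_def by (intro prod.cong refl pf_real n6)
    finally show ?thesis .
  qed
  have Ppos: "Pc > 0" unfolding Pc_def by (intro prod_pos) (simp add: divide_pos_pos)
  have C5eq: "C5 n X TW TS w = 1 / (8 * Pc) * (\<Sum>l\<in>L. hl l w)" for w
    unfolding C5_def Pc_def L_def hl_def ..
  have EC5: "integral\<^sup>L M (C5 n X TW TS) = m / 8"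
  proof -
    have "integral\<^sup>L M (C5 n X TW TS) = 1 / (8 * Pc) * (\<Sum>l\<in>L. \<integral>w. hl l w \<partial>M)"
      unfolding C5eq by (simp add: Bochner_Integration.integral_sum hi)
    also have "\<dots> = 1 / (8 * Pc) * (real (card L) * m)" by (simp add: hmean)
    also have "\<dots> = m / 8" using Ppos unfolding cardL by simp
    finally show ?thesis .
  qed
  show ?thesis
  proof
    show "integral\<^sup>L M (C5 n X TW TS) =
           trace ((kron TW TS ** VN n Sigma) ** (kron TW TS ** VN n Sigma) ** (kron TW TS ** VN n Sigma))"
      unfolding EC5 m_def trace_K(1) T_def V_def by simp
  next
    define D where "D = Dset n"
    have DL: "D \<subseteq> L \<times> L" unfolding D_def Dset_def L_def by auto
    have indD: "indep_var borel (hl l) borel (hl l')" if "(l, l') \<in> D" for l l'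
    proof -
      have lL: "l \<in> L" "l' \<in> L" using that DL by auto
      have disj: "Obsl l \<inter> Obsl l' = {}"
        using that unfolding D_def Dset_def Obsl_def by auto
      have sub: "Obsl l'' \<subseteq> {(i, j). j < n i}" if "l'' \<in> L" for l''
        using lprops(2)[OF that] unfolding Obsl_def by auto
      have r: "indep_var (PiM (Obsl l) (\<lambda>_. borel)) (\<lambda>w. restrict (\<lambda>ob. (\<lambda>(i, j). X i j) ob w) (Obsl l))
          (PiM (Obsl l') (\<lambda>_. borel)) (\<lambda>w. restrict (\<lambda>ob. (\<lambda>(i, j). X i j) ob w) (Obsl l'))"
        by (rule indep_var_restrict[OF ind disj sub[OF lL(1)] sub[OF lL(2)]])
      have "indep_var borel (\<lambda>w. HH n TW TS l (restrict (\<lambda>ob. (\<lambda>(i, j). X i j) ob w) (Obsl l)))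
          borel (\<lambda>w. HH n TW TS l' (restrict (\<lambda>ob. (\<lambda>(i, j). X i j) ob w) (Obsl l')))"
        using indep_var_compose[OF r HH_meas HH_meas] by (simp add: comp_def)
      then show ?thesis unfolding hl_def[abs_def] hl_HH .
    qed
    note uv = ustat_var[OF finL hi hi2 hmean hb DL indD]
    define a where "a i = real (n i choose 6)" for i
    define b where "b i = real ((n i - 6) choose 6)" for i
    define c where "c = (\<Prod>i\<in>(UNIV::'g set). 720::real)"
    have apos: "a i > 0" for i unfolding a_def using n6[of i] by simp
    have Pa: "(\<Prod>i\<in>UNIV. a i) > 0" by (intro prod_pos) (simp add: apos)
    have cpos: "c > 0" unfolding c_def by simp
    have pfr: "real (\<Prod>{m - 5..m}) = 720 * real (m choose 6)" for m
      unfolding pf_choose by (simp add: fact_numeral)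
    have cP: "Pc = c * (\<Prod>i\<in>UNIV. a i)"
    proof -
      have "Pc = (\<Prod>i\<in>UNIV. real (\<Prod>{n i - 5..n i}))"
        unfolding cardL[symmetric] L_def card_six_tuples by simp
      also have "\<dots> = (\<Prod>i\<in>UNIV. 720 * a i)" unfolding pfr a_def ..
      also have "\<dots> = c * (\<Prod>i\<in>UNIV. a i)" unfolding c_def by (simp add: prod.distrib)
      finally show ?thesis .
    qed
    have cD: "real (card D) = (c * (\<Prod>i\<in>UNIV. a i)) * (c * (\<Prod>i\<in>UNIV. b i))"
    proof -
      have "real (card D) = (\<Prod>i\<in>UNIV. real (\<Prod>{n i - 5..n i}) * real (\<Prod>{(n i - 6) - 5..n i - 6}))"
        unfolding D_def card_Dset by simp
      also have "\<dots> = (\<Prod>i\<in>UNIV. (720 * a i) * (720 * b i))" unfolding pfr a_def b_def ..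
      also have "\<dots> = (\<Prod>i\<in>UNIV. 720 * a i) * (\<Prod>i\<in>UNIV. 720 * b i)"
        by (rule prod.distrib)
      also have "\<dots> = (c * (\<Prod>i\<in>UNIV. a i)) * (c * (\<Prod>i\<in>UNIV. b i))"
        unfolding c_def prod.distrib ..
      finally show ?thesis .
    qed
    have cLD: "real (card (L \<times> L - D)) = Pc * Pc - real (card D)"
    proof -
      have "card (L \<times> L - D) = card (L \<times> L) - card D"
        by (rule card_Diff_subset[OF finite_subset[OF DL] DL]) (simp add: finL)
      moreover have "card D \<le> card (L \<times> L)" by (rule card_mono) (simp_all add: finL DL)
      ultimately show ?thesis using cardL by (simp add: of_nat_diff card_cartesian_product)
    qed
    define t where "t = trace ((kron TW TS ** VN n Sigma) ** (kron TW TS ** VN n Sigma))"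
    have Bt: "B = 27 * 64 * t^3" unfolding B_def t_def trace_K(2) T_def V_def by (simp add: power_mult_distrib)
    have ceq: "(\<lambda>w. (C5 n X TW TS w - integral\<^sup>L M (C5 n X TW TS))^2)
        = (\<lambda>w. (1 / (8 * Pc))^2 * ((\<Sum>l\<in>L. hl l w) - real (card L) * m)^2)"
    proof
      fix w
      have "C5 n X TW TS w - integral\<^sup>L M (C5 n X TW TS) = 1 / (8 * Pc) * ((\<Sum>l\<in>L. hl l w) - real (card L) * m)"
        unfolding C5eq EC5 cardL using Ppos by (simp add: field_simps)
      then show "(C5 n X TW TS w - integral\<^sup>L M (C5 n X TW TS))^2 = (1 / (8 * Pc))^2 * ((\<Sum>l\<in>L. hl l w) - real (card L) * m)^2"
        by (simp only: power_mult_distrib)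
    qed
    have "integral\<^sup>L M (\<lambda>w. (C5 n X TW TS w - integral\<^sup>L M (C5 n X TW TS))^2)
        = (1 / (8 * Pc))^2 * (\<integral>w. ((\<Sum>l\<in>L. hl l w) - real (card L) * m)^2 \<partial>M)"
      unfolding ceq by simp
    also have "\<dots> \<le> (1 / (8 * Pc))^2 * (real (card (L \<times> L - D)) * B)"
      by (intro mult_left_mono uv zero_le_power2)
    also have "\<dots> = ((\<Prod>i\<in>UNIV. a i) - (\<Prod>i\<in>UNIV. b i)) / (\<Prod>i\<in>UNIV. a i) * 27 * t^3"
      unfolding cLD cD cP Bt using final_arith[OF cpos Pa, of "\<Prod>i\<in>UNIV. b i" t] by (simp add: mult.assoc)
    finally show "integral\<^sup>L M (\<lambda>w. (C5 n X TW TS w - integral\<^sup>L M (C5 n X TW TS))^2)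
         \<le> ((\<Prod>i\<in>UNIV. real (n i choose 6)) - (\<Prod>i\<in>UNIV. real ((n i - 6) choose 6)))
              / (\<Prod>i\<in>UNIV. real (n i choose 6))
           * 27 * (trace ((kron TW TS ** VN n Sigma) ** (kron TW TS ** VN n Sigma))) ^ 3"
      unfolding a_def b_def t_def .
  qed
qed

end
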